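(* There is a constant $C>0$ such that for every $p\in\mathbb N$ and every polynomial $u$ of degree $\le p$ on $\widehat K$, writing $u=u_{\mathcal V}+u_{\mathcal E_1}+u_{\mathcal E_2}+u_{\mathcal E_3}+u_{\mathcal I}$ with $u_{\mathcal V}=\sum_{j=1}^3\alpha_j^{\mathcal V}\varphi_j^{\mathcal V}$, $u_{\mathcal E_m}=\sum_{j=0}^{p-2}\alpha_j^{\mathcal E_m}\varphi_j^{\mathcal E_m}$, $u_{\mathcal I}=\sum_{i+j\le p-3}\alpha^{\mathcal I}_{(ij)}\varphi^{\mathcal I}_{(ij)}$ (the expansion in the basis described in the context), one has $$\|u_{\mathcal V}\|^2_{L^2(\widehat K)}\le C\sum_{j=1}^3|\alpha^{\mathcal V}_j|^2,\quad\|u_{\mathcal E_m}\|^2_{L^2(\widehat K)}\le C\sum_{j=0}^{p-2}|\alpha_j^{\mathcal E_m}|^2\ (m=1,2,3),\quad\|u_{\mathcal I}\|^2_{L^2(\widehat K)}=\sum_{i+j\le p-3}|\alpha^{\mathcal I}_{(ij)}|^2,$$ and consequently $$\|u\|^2_{L^2(\widehat K)}\le C\Big(\sum_{j=1}^3|\alpha_j^{\mathcal V}|^2+\sum_{m=1}^3\sum_{j=0}^{p-2}|\alpha_j^{\mathcal E_m}|^2+\sum_{i+j\le p-3}|\alpha^{\mathcal I}_{(ij)}|^2\Big).$$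
   Context: $\widehat K=\mathrm{conv}\{(0,0),(1,0),(0,1)\}$ with barycentric coordinates $\lambda_1,\lambda_2,\lambda_3$ and edges $\mathcal E_1,\mathcal E_2,\mathcal E_3$. $\ell_n$ are the Legendre polynomials, $L_n(s):=\int_{-1}^s\ell_{n-1}(t)\,dt$ ($n\ge1$), $P_n^{(\alpha,\beta)}$ the Jacobi polynomials (orthogonal on $(-1,1)$ w.r.t. weight $(1-x)^\alpha(1+x)^\beta$, standard normalization), $L_n^{\mathcal S}(s,t):=t^nL_n(s/t)$, $P_n^{\mathcal S,(\alpha,\beta)}(s,t):=t^nP_n^{(\alpha,\beta)}(s/t)$. The basis of polynomials of degree $\le p$ on $\widehat K$: vertex functions $\varphi^{\mathcal V}_i:=\lambda_i$; for edge $\mathcal E_m$ with endpoints $e_1,e_2$, $\varphi^{\mathcal E_m}_i:=\sqrt{\tfrac{2i+3}{2}}L^{\mathcal S}_{i+2}(\lambda_{e_2}-\lambda_{e_1},\lambda_{e_1}+\lambda_{e_2})$, $0\le i\le p-2$; cell functions $\varphi^{\mathcal I}_{(i,j)}:=c_{ij}\lambda_1\lambda_2\lambda_3P_i^{\mathcal S,(2,2)}(\lambda_1-\lambda_2,\lambda_1+\lambda_2)P_j^{(2i+5,2)}(2\lambda_3-1)$, $0\le i+j\le p-3$, with $c_{ij}$ chosen so that $\|\varphi^{\mathcal I}_{(i,j)}\|_{L^2(\widehat K)}=1$. *)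

theory Defs
  imports "HOL-Analysis.Analysis"
begin

type_synonym pt = "real \<times> real"

definition Khat :: "pt set" where
  "Khat = convex hull {(0,0), (1,0), (0,1)}"

definition L2sq :: "(pt \<Rightarrow> real) \<Rightarrow> real" where
  "L2sq f = integral Khat (\<lambda>x. (f x)\<^sup>2)"

text \<open>Barycentric coordinates: vertex 1 = (0,0), vertex 2 = (1,0), vertex 3 = (0,1).\<close>
definition bary :: "nat \<Rightarrow> pt \<Rightarrow> real" where
  "bary i x = (if i = 1 then 1 - fst x - snd x else if i = 2 then fst x else snd x)"

definition jacobiP :: "nat \<Rightarrow> nat \<Rightarrow> nat \<Rightarrow> real \<Rightarrow> real" where
  "jacobiP n a b x = (\<Sum>s\<le>n. real ((n + a) choose (n - s)) * real ((n + b) choose s)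
       * ((x - 1) / 2) ^ s * ((x + 1) / 2) ^ (n - s))"

definition legendre :: "nat \<Rightarrow> real \<Rightarrow> real" where
  "legendre n x = jacobiP n 0 0 x"

definition intLegendre :: "nat \<Rightarrow> real \<Rightarrow> real" where
  "intLegendre n s = integral {-1..s} (legendre (n - 1))"

definition intLegendreS :: "nat \<Rightarrow> real \<Rightarrow> real \<Rightarrow> real" where
  "intLegendreS n s t = t ^ n * intLegendre n (s / t)"

definition jacobiS :: "nat \<Rightarrow> nat \<Rightarrow> nat \<Rightarrow> real \<Rightarrow> real \<Rightarrow> real" where
  "jacobiS n a b s t = t ^ n * jacobiP n a b (s / t)"

text \<open>Edge endpoints: E_1 = (V2,V3), E_2 = (V3,V1), E_3 = (V1,V2).\<close>
definition edge_e1 :: "nat \<Rightarrow> nat" where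
  "edge_e1 m = (if m = 1 then 2 else if m = 2 then 3 else 1)"
definition edge_e2 :: "nat \<Rightarrow> nat" where
  "edge_e2 m = (if m = 1 then 3 else if m = 2 then 1 else 2)"

definition vertex_fn :: "nat \<Rightarrow> pt \<Rightarrow> real" where
  "vertex_fn i x = bary i x"

definition edge_fn :: "nat \<Rightarrow> nat \<Rightarrow> pt \<Rightarrow> real" where
  "edge_fn m i x = sqrt ((2 * real i + 3) / 2) *
     intLegendreS (i + 2) (bary (edge_e2 m) x - bary (edge_e1 m) x)
                          (bary (edge_e1 m) x + bary (edge_e2 m) x)"

definition cell_fn_raw :: "nat \<Rightarrow> nat \<Rightarrow> pt \<Rightarrow> real" where
  "cell_fn_raw i j x = bary 1 x * bary 2 x * bary 3 x *
     jacobiS i 2 2 (bary 1 x - bary 2 x) (bary 1 x + bary 2 x) *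
     jacobiP j (2 * i + 5) 2 (2 * bary 3 x - 1)"

definition cell_const :: "nat \<Rightarrow> nat \<Rightarrow> real" where
  "cell_const i j = 1 / sqrt (L2sq (cell_fn_raw i j))"

definition cell_fn :: "nat \<Rightarrow> nat \<Rightarrow> pt \<Rightarrow> real" where
  "cell_fn i j x = cell_const i j * cell_fn_raw i j x"

definition edge_idx :: "nat \<Rightarrow> nat set" where
  "edge_idx p = {j. j + 2 \<le> p}"
definition cell_idx :: "nat \<Rightarrow> (nat \<times> nat) set" where
  "cell_idx p = {(i, j). i + j + 3 \<le> p}"

end

theory Submission
  imports Defs "HOL-Computational_Algebra.Polynomial"
begin


lemma pascal_sum:
  fixes f g :: "nat \<Rightarrow> 'a::comm_ring_1"
  shows "(\<Sum>k\<le>n. of_nat (n choose k) * (f k * g (Suc n - k))) +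
         (\<Sum>k\<le>n. of_nat (n choose k) * (f (Suc k) * g (n - k))) =
         (\<Sum>k\<le>Suc n. of_nat (Suc n choose k) * (f k * g (Suc n - k)))"
proof -
  have e1: "(\<Sum>k\<le>n. of_nat (n choose k) * (f k * g (Suc n - k))) =
     (\<Sum>k\<le>Suc n. of_nat (n choose k) * (f k * g (Suc n - k)))"
    by (simp add: sum.atMost_Suc binomial_eq_0)
  also have "\<dots> = f 0 * g (Suc n) + (\<Sum>k\<le>n. of_nat (n choose Suc k) * (f (Suc k) * g (n - k)))"
    by (subst sum.atMost_Suc_shift) simp
  finally have e1': "(\<Sum>k\<le>n. of_nat (n choose k) * (f k * g (Suc n - k))) = f 0 * g (Suc n) + (\<Sum>k\<le>n. of_nat (n choose Suc k) * (f (Suc k) * g (n - k)))" .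
  have "(\<Sum>k\<le>Suc n. of_nat (Suc n choose k) * (f k * g (Suc n - k))) =
        f 0 * g (Suc n) + (\<Sum>k\<le>n. of_nat (Suc n choose Suc k) * (f (Suc k) * g (n - k)))"
    by (subst sum.atMost_Suc_shift) simp
  also have "\<dots> = f 0 * g (Suc n) + (\<Sum>k\<le>n. of_nat (n choose Suc k) * (f (Suc k) * g (n - k)))
         + (\<Sum>k\<le>n. of_nat (n choose k) * (f (Suc k) * g (n - k)))"
    by (simp add: sum.distrib algebra_simps)
  finally show ?thesis using e1' by simp
qed

lemma higher_pderiv_mult:
  fixes p q :: "real poly"
  shows "(pderiv ^^ n) (p * q) = (\<Sum>k\<le>n. of_nat (n choose k) * ((pderiv ^^ k) p * (pderiv ^^ (n - k)) q))"
proof (induction n arbitrary: p q)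
  case 0 show ?case by simp
next
  case (Suc n)
  have "(pderiv ^^ Suc n) (p*q) = (pderiv ^^ n) (pderiv (p*q))"
    by (simp add: funpow_Suc_right del: funpow.simps)
  also have "pderiv (p*q) = p * pderiv q + pderiv p * q" by (simp add: pderiv_mult mult.commute)
  also have "(pderiv^^n) (p * pderiv q + pderiv p * q) = (pderiv^^n)(p*pderiv q) + (pderiv^^n)(pderiv p * q)"
    by (rule higher_pderiv_add)
  also have "\<dots> = (\<Sum>k\<le>n. of_nat (n choose k) * ((pderiv ^^ k) p * (pderiv ^^ (Suc n - k)) q))
     + (\<Sum>k\<le>n. of_nat (n choose k) * ((pderiv ^^ (Suc k)) p * (pderiv ^^ (n - k)) q))"
    unfolding Suc.IH
    by (intro arg_cong2[where f="(+)"] sum.cong refl)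
       (simp_all add: funpow_Suc_right Suc_diff_le del: funpow.simps)
  also have "\<dots> = (\<Sum>k\<le>Suc n. of_nat (Suc n choose k) * ((pderiv ^^ k) p * (pderiv ^^ (Suc n - k)) q))"
    by (rule pascal_sum[where f="\<lambda>k. (pderiv ^^ k) p" and g="\<lambda>k. (pderiv ^^ k) q"])
  finally show ?case .
qed

lemma higher_pderiv_lin_pow:
  fixes c :: real
  shows "k \<le> m \<Longrightarrow> (pderiv ^^ k) ([:c,1:]^m) = smult (fact m / fact (m-k)) ([:c,1:]^(m-k))"
proof (induction k)
  case 0 then show ?case by simp
next
  case (Suc k)
  then have km: "k < m" by simp
  obtain r where r: "m - k = Suc r" using km by (metis Suc_diff_Suc)
  have "(pderiv ^^ Suc k) ([:c,1:]^m) = pderiv (smult (fact m / fact (m-k)) ([:c,1:]^(m-k)))"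
    using Suc by simp
  also have "\<dots> = smult (fact m / fact (m-k) * of_nat (Suc r)) ([:c,1:]^r)"
  proof -
    have d: "pderiv ([:c,1:]^Suc r) = smult (of_nat (Suc r)) ([:c,1:]^r)"
      by (simp only: pderiv_power_Suc) (simp add: pderiv_pCons)
    show ?thesis unfolding r pderiv_smult d by simp
  qed
  also have "fact m / fact (m-k) * of_nat (Suc r) = (fact m / fact (m - Suc k) :: real)"
    using r by (simp add: fact_Suc field_simps del: of_nat_Suc) (metis Suc_diff_Suc diff_Suc_1 km r)
  also have "r = m - Suc k" using r by simp
  finally show ?case .
qed



lemma sum_atMost_rev: "(\<Sum>s\<le>n. F s) = (\<Sum>k\<le>(n::nat). F (n - k))"
  by (rule sum.reindex_bij_witness[where i="\<lambda>k. n - k" and j="\<lambda>k. n - k"]) auto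

lemma smult_sum_right: "smult c (sum f A) = (\<Sum>i\<in>A. smult c (f i))"
  by (induction A rule: infinite_finite_induct) (simp_all add: smult_add_right)

definition Jp :: "nat \<Rightarrow> nat \<Rightarrow> nat \<Rightarrow> real poly" where
  "Jp n a b = (\<Sum>s\<le>n. smult (real ((n+a) choose (n-s)) * real ((n+b) choose s))
                 ([:-1/2,1/2:]^s * [:1/2,1/2:]^(n-s)))"

lemma poly_Jp: "poly (Jp n a b) x = jacobiP n a b x"
  unfolding Jp_def jacobiP_def
  by (simp add: poly_sum field_simps)

lemma rodrigues:
  "[:-1,1:]^a * [:1,1:]^b * smult (2^n * fact n) (Jp n a b) =
   (pderiv ^^ n) ([:-1,1:]^(n+a) * [:1,1:]^(n+b) :: real poly)"
proof -
  define X :: "real poly" where "X = [:-1,1:]"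
  define Y :: "real poly" where "Y = [:1,1:]"
  have hX: "[:-1/2,1/2:] = smult (1/2) X" by (simp add: X_def)
  have hY: "[:1/2,1/2:] = smult (1/2) Y" by (simp add: Y_def)
  have "(pderiv ^^ n) ([:-1,1:]^(n+a) * [:1,1:]^(n+b) :: real poly) =
    (\<Sum>k\<le>n. of_nat (n choose k) * (smult (fact (n+a) / fact (n+a-k)) (X^(n+a-k)) *
           smult (fact (n+b) / fact (n+b-(n-k))) (Y^(n+b-(n-k)))))"
    unfolding higher_pderiv_mult X_def Y_def
    by (intro sum.cong refl, subst higher_pderiv_lin_pow, simp, subst higher_pderiv_lin_pow, simp_all)
  also have "\<dots> = (\<Sum>k\<le>n. smult (fact n * real ((n+a) choose k) * real ((n+b) choose (n-k)))
                   (X^(a + (n-k)) * Y^(b+k)))"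
  proof (intro sum.cong refl)
    fix k assume k: "k \<in> {..n}"
    then have kn: "k \<le> n" by simp
    have c: "real (n choose k) * (fact (n+a) / fact (n+a-k)) * (fact (n+b) / fact (n+b-(n-k)))
        = fact n * real ((n+a) choose k) * real ((n+b) choose (n-k))"
      using kn
      by (simp add: binomial_fact)
    have p: "n+a-k = a+(n-k)" "n+b-(n-k) = b+k" using kn by simp_all
    show "of_nat (n choose k) * (smult (fact (n+a) / fact (n+a-k)) (X^(n+a-k)) *
           smult (fact (n+b) / fact (n+b-(n-k))) (Y^(n+b-(n-k)))) =
          smult (fact n * real ((n+a) choose k) * real ((n+b) choose (n-k))) (X^(a + (n-k)) * Y^(b+k))"
      unfolding p(1) p(2)[symmetric] c[symmetric]
      by (simp add: of_nat_mult_conv_smult p(2) mult_ac)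
  qed
  also have "\<dots> = (\<Sum>s\<le>n. smult (fact n * real ((n+a) choose (n-s)) * real ((n+b) choose s))
                   (X^(a + s) * Y^(b+(n-s))))"
    by (subst sum_atMost_rev) (intro sum.cong refl, simp)
  also have "\<dots> = X^a * Y^b * smult (2^n * fact n) (Jp n a b)"
    unfolding Jp_def hX hY
    apply (simp add: sum_distrib_left smult_sum_right mult_ac smult_power field_simps del: power_Suc)
    apply (intro sum.cong refl)
    apply (simp add: power_add[symmetric])
    apply (simp add: power_add mult_ac)
    done
  finally show ?thesis unfolding X_def Y_def by simp
qed



lemma pow_dvd_pderiv:
  fixes p :: "real poly"
  assumes "[:c,1:]^(Suc m) dvd p" shows "[:c,1:]^m dvd pderiv p"
proof -
  obtain r where r: "p = [:c,1:]^(Suc m) * r" using assms by (auto elim: dvdE)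
  have "pderiv p = [:c,1:]^m * ([:c,1:] * pderiv r + smult (of_nat (Suc m)) r)"
    unfolding r pderiv_mult pderiv_power_Suc by (simp add: pderiv_pCons algebra_simps)
  then show ?thesis by simp
qed

lemma pow_dvd_higher_pderiv:
  fixes p :: "real poly"
  shows "[:c,1:]^(k + m) dvd p \<Longrightarrow> [:c,1:]^m dvd (pderiv ^^ k) p"
proof (induction k arbitrary: p)
  case 0 then show ?case by simp
next
  case (Suc k)
  have "[:c,1:]^(k + m) dvd pderiv p"
    by (rule pow_dvd_pderiv) (use Suc.prems in simp)
  from Suc.IH[OF this] show ?case by (simp add: funpow_Suc_right del: funpow.simps)
qed

definition Wp :: "nat \<Rightarrow> nat \<Rightarrow> nat \<Rightarrow> real poly" where
  "Wp n a b = [:-1,1:]^(n+a) * [:1,1:]^(n+b)"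

lemma Wp_vanish:
  assumes "k < n"
  shows "poly ((pderiv ^^ k) (Wp n a b)) 1 = 0" "poly ((pderiv ^^ k) (Wp n a b)) (-1) = 0"
proof -
  have "[:-1,1:]^(k + (n - k + a)) dvd Wp n a b" using assms unfolding Wp_def by simp
  then have "[:-1,1:]^(n-k+a) dvd (pderiv ^^ k) (Wp n a b)" by (rule pow_dvd_higher_pderiv)
  moreover have "[:-1,1:] dvd [:-1,1:]^(n-k+a)" using assms by (simp add: dvd_power)
  ultimately have "[:-1,1:] dvd (pderiv ^^ k) (Wp n a b)" by (rule dvd_trans[rotated])
  then show "poly ((pderiv ^^ k) (Wp n a b)) 1 = 0" by (simp add: poly_eq_0_iff_dvd)
  have "[:1,1:]^(k + (n - k + b)) dvd Wp n a b" using assms unfolding Wp_def by simp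
  then have "[:1,1:]^(n-k+b) dvd (pderiv ^^ k) (Wp n a b)" by (rule pow_dvd_higher_pderiv)
  moreover have "[:1,1:] dvd [:1,1:]^(n-k+b)" using assms by (simp add: dvd_power)
  ultimately have "[:1,1:] dvd (pderiv ^^ k) (Wp n a b)" by (meson dvd_trans)
  moreover have "[:- (-1),1:] = [:1::real,1:]" by simp
  ultimately have "[:- (-1),1:] dvd (pderiv ^^ k) (Wp n a b)" by simp
  then show "poly ((pderiv ^^ k) (Wp n a b)) (-1) = 0" by (simp only: poly_eq_0_iff_dvd)
qed

definition PI :: "real poly \<Rightarrow> real" where
  "PI p = integral {-1..1} (poly p)"

lemma poly_has_integral_deriv:
  fixes p :: "real poly"
  assumes "a \<le> b"
  shows "((\<lambda>x. poly (pderiv p) x) has_integral (poly p b - poly p a)) {a..b}"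
  by (rule fundamental_theorem_of_calculus[OF assms])
     (auto intro!: DERIV_subset[OF poly_DERIV] simp: has_real_derivative_iff_has_vector_derivative[symmetric])

lemma PI_pderiv: "PI (pderiv p) = poly p 1 - poly p (-1)"
  unfolding PI_def using poly_has_integral_deriv[of "-1" 1 p] by (simp add: integral_unique)

lemma poly_integrable: "(poly p) integrable_on {a..b::real}"
  by (rule integrable_continuous_interval) (auto intro: continuous_intros)

lemma PI_add: "PI (p + q) = PI p + PI q"
proof -
  have "poly (p + q) = (\<lambda>x. poly p x + poly q x)" by auto
  then show ?thesis unfolding PI_def by (simp add: integral_add poly_integrable)
qed

lemma PI_diff: "PI (p - q) = PI p - PI q"
proof -
  have "poly (p - q) = (\<lambda>x. poly p x - poly q x)" by auto
  then show ?thesis unfolding PI_def by (simp add: integral_diff poly_integrable)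
qed

lemma PI_smult: "PI (smult c p) = c * PI p"
proof -
  have "poly (smult c p) = (\<lambda>x. c * poly p x)" by auto
  then show ?thesis unfolding PI_def by simp
qed

lemma parts:
  assumes "k \<le> n"
  shows "PI (q * (pderiv ^^ k) (Wp n a b)) = (-1)^k * PI ((pderiv ^^ k) q * Wp n a b)"
  using assms
proof (induction k arbitrary: q)
  case 0 then show ?case by simp
next
  case (Suc j)
  define V where "V = (pderiv ^^ j) (Wp n a b)"
  have jn: "j < n" using Suc.prems by simp
  have "PI (q * (pderiv ^^ Suc j) (Wp n a b)) = PI (q * pderiv V)" by (simp add: V_def)
  also have "q * pderiv V = pderiv (q * V) - pderiv q * V" by (simp add: pderiv_mult algebra_simps)
  also have "PI \<dots> = PI (pderiv (q*V)) - PI (pderiv q * V)" by (rule PI_diff)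
  also have "PI (pderiv (q*V)) = 0"
    unfolding PI_pderiv using Wp_vanish[OF jn] by (simp add: V_def)
  also have "PI (pderiv q * V) = (-1)^j * PI ((pderiv ^^ Suc j) q * Wp n a b)"
    unfolding V_def using Suc.IH[of "pderiv q"] jn by (simp add: funpow_Suc_right del: funpow.simps)
  finally show ?case by simp
qed

lemma higher_pderiv_deg_zero:
  fixes q :: "real poly"
  assumes "degree q < n" shows "(pderiv ^^ n) q = 0"
proof (rule poly_eqI)
  fix i
  have "coeff q (i + n) = 0" using assms by (intro coeff_eq_0) simp
  then show "coeff ((pderiv ^^ n) q) i = coeff 0 i" by (simp add: coeff_higher_pderiv)
qed

lemma rodrigues_Wp: "smult (2^n * fact n) ([:-1,1:]^a * [:1,1:]^b * Jp n a b) = (pderiv ^^ n) (Wp n a b)"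
  unfolding Wp_def rodrigues[symmetric] by simp

lemma jacobi_weight_eq:
  "(1-x)^a * (1+x)^b * jacobiP n a b x = (-1)^a / (2^n * fact n) * poly ((pderiv ^^ n) (Wp n a b)) x"
proof -
  have "poly ((pderiv ^^ n) (Wp n a b)) x = 2^n * fact n * ((x - 1)^a * (1+x)^b * jacobiP n a b x)"
    unfolding rodrigues_Wp[symmetric] by (simp add: poly_Jp algebra_simps)
  moreover have "(x-1)^a = (-1)^a * (1-x)^a"
    by (metis minus_diff_eq mult_minus1 power_minus)
  ultimately show ?thesis by (simp add: field_simps)
qed

lemma jacobi_orth:
  assumes "degree q < n"
  shows "integral {-1..1} (\<lambda>x. (1-x)^a * (1+x)^b * jacobiP n a b x * poly q x) = 0"
proof -
  have "(\<lambda>x. (1-x)^a * (1+x)^b * jacobiP n a b x * poly q x)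
      = (\<lambda>x. (-1)^a / (2^n * fact n) * poly (q * (pderiv ^^ n) (Wp n a b)) x)"
    by (rule ext, subst jacobi_weight_eq, simp)
  then have "integral {-1..1} (\<lambda>x. (1-x)^a * (1+x)^b * jacobiP n a b x * poly q x)
      = integral {-1..1} (\<lambda>x. (-1)^a / (2^n * fact n) * poly (q * (pderiv ^^ n) (Wp n a b)) x)"
    by simp
  also have "\<dots> = (-1)^a / (2^n * fact n) * PI (q * (pderiv ^^ n) (Wp n a b))"
  proof -
    have "poly (q * (pderiv ^^ n) (Wp n a b)) = (\<lambda>x. poly q x * poly ((pderiv ^^ n) (Wp n a b)) x)" by auto
    then show ?thesis unfolding PI_def by simp
  qed
  also have "PI (q * (pderiv ^^ n) (Wp n a b)) = 0"
  proof -
    have "poly 0 = (\<lambda>x. 0::real)" by auto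
    then show ?thesis unfolding parts[OF order_refl] higher_pderiv_deg_zero[OF assms] by (simp add: PI_def)
  qed
  finally show ?thesis by simp
qed

lemma degree_lin_pow: "degree ([:c,d::real:]^k) \<le> k"
proof -
  have "degree ([:c,d:]^k) \<le> k * degree [:c,d:]" by (metis degree_power_le mult.commute)
  also have "\<dots> \<le> k" by (cases "d = 0") auto
  finally show ?thesis .
qed

lemma degree_Jp: "degree (Jp n a b) \<le> n"
  unfolding Jp_def
proof (intro degree_sum_le order.trans[OF degree_smult_le] order.trans[OF degree_mult_le])
  fix s assume "s \<in> {..n}"
  then show "degree ([:-1/2,1/2:]^s :: real poly) + degree ([:1/2,1/2:]^(n-s) :: real poly) \<le> n"
    using degree_lin_pow[of "-(1/2)" "1/2" s] degree_lin_pow[of "1/2" "1/2" "n-s"] by simp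
qed simp



definition Qp :: "real poly" where "Qp = [:-1,0,1:]"

lemma Wp00: "Wp n 0 0 = Qp ^ n"
proof -
  have "[:-1,1:] * [:1,1:] = Qp" by (simp add: Qp_def)
  then show ?thesis unfolding Wp_def by (simp add: power_mult_distrib[symmetric])
qed

lemma poly_Qp: "poly Qp x = x^2 - 1"
  by (simp add: Qp_def power2_eq_square)

lemma degree_Qp_pow: "degree (Qp ^ n) = 2 * n"
  by (subst degree_power_eq) (simp_all add: Qp_def)

lemma lead_Qp_pow: "coeff (Qp ^ n) (2*n) = 1"
  using lead_coeff_power[of Qp n] degree_Qp_pow[of n] by (simp add: Qp_def)

lemma higher_pderiv_Qp_full: "(pderiv ^^ (2*n)) (Qp ^ n) = [:fact (2*n):]"
proof (rule poly_eqI)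
  fix i
  show "coeff ((pderiv ^^ (2*n)) (Qp ^ n)) i = coeff [:fact (2*n):] i"
  proof (cases "i = 0")
    case True
    then show ?thesis
      by (simp add: coeff_higher_pderiv lead_Qp_pow pochhammer_fact[symmetric])
  next
    case False
    have "coeff (Qp ^ n) (i + 2*n) = 0" using False by (intro coeff_eq_0) (simp add: degree_Qp_pow)
    then show ?thesis using False by (simp add: coeff_higher_pderiv coeff_pCons split: nat.split)
  qed
qed

lemma PI_mult: "PI (p*q) = integral {-1..1} (\<lambda>x. poly p x * poly q x)"
proof -
  have "poly (p*q) = (\<lambda>x. poly p x * poly q x)" by auto
  then show ?thesis unfolding PI_def by simp
qed

lemma legendre_poly: "legendre n x = poly (Jp n 0 0) x"
  by (simp add: legendre_def poly_Jp)

lemma poly_integrable_on: "(\<lambda>x. poly p x) integrable_on {a..b::real}"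
  by (rule integrable_continuous_interval) (auto intro: continuous_intros)

lemma central_binom_le: "real ((2*n) choose n) \<le> 4^n"
proof -
  have "(2*n choose n) \<le> (\<Sum>k\<le>2*n. 2*n choose k)"
    by (rule member_le_sum) auto
  also have "\<dots> = 2^(2*n)" by (rule choose_row_sum)
  finally have "real (2*n choose n) \<le> 2^(2*n)" by (metis of_nat_le_iff of_nat_numeral of_nat_power)
  also have "(2::real)^(2*n) = 4^n" by (simp add: power_mult)
  finally show ?thesis .
qed

lemma legendre_norm_le: "integral {-1..1} (\<lambda>x. (legendre n x)^2) \<le> 2"
proof -
  define J where "J = Jp n 0 0"
  define c :: real where "c = 2^n * fact n"
  have cpos: "c > 0" by (simp add: c_def)
  have rod: "smult c J = (pderiv ^^ n) (Qp ^ n)"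
    using rodrigues_Wp[of n 0 0] by (simp add: J_def c_def Wp00)
  have dJ: "(pderiv ^^ n) J = smult (fact (2*n) / c) 1"
  proof -
    have "smult c ((pderiv ^^ n) J) = (pderiv ^^ n) ((pderiv ^^ n) (Qp ^ n))"
      by (simp add: rod[symmetric] higher_pderiv_smult)
    also have "\<dots> = (pderiv ^^ (2*n)) (Qp ^ n)" by (simp only: mult_2 funpow_add o_apply)
    also have "\<dots> = smult (fact (2*n)) 1" by (simp add: higher_pderiv_Qp_full)
    finally have "smult c ((pderiv ^^ n) J) = smult (fact (2*n)) 1" .
    then have "smult (1/c) (smult c ((pderiv ^^ n) J)) = smult (1/c) (smult (fact (2*n)) 1)" by simp
    then show ?thesis using cpos by simp
  qed
  have "integral {-1..1} (\<lambda>x. (legendre n x)^2) = PI (J * J)"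
    unfolding PI_mult by (simp add: legendre_poly J_def power2_eq_square)
  also have "J * J = smult (1/c) (J * (pderiv ^^ n) (Wp n 0 0))"
    using cpos by (simp add: Wp00 rod[symmetric])
  also have "PI \<dots> = (1/c) * ((-1)^n * PI ((pderiv ^^ n) J * Wp n 0 0))"
    by (simp add: PI_smult parts)
  also have "PI ((pderiv ^^ n) J * Wp n 0 0) = (fact (2*n) / c) * PI (Wp n 0 0)"
    by (simp add: dJ PI_smult)
  finally have eq: "integral {-1..1} (\<lambda>x. (legendre n x)^2) = (fact (2*n) / c^2) * ((-1)^n * PI (Wp n 0 0))"
    by (simp add: power2_eq_square field_simps)
  have pw: "(-1)^n * poly (Wp n 0 0) x = (1 - x^2)^n" for x :: real
  proof -
    have "(-1)^n * poly (Wp n 0 0) x = (-1)^n * (x^2-1)^n" by (simp add: Wp00 poly_Qp poly_power)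
    also have "\<dots> = ((-1)*(x^2-1))^n" by (rule power_mult_distrib[symmetric])
    also have "(-1)*(x^2-1) = 1 - x^2" by simp
    finally show ?thesis .
  qed
  have I: "(-1)^n * PI (Wp n 0 0) = integral {-1..1} (\<lambda>x::real. (1 - x^2)^n)"
    unfolding PI_def pw[symmetric] by simp
  have I1: "integral {-1..1} (\<lambda>x::real. (1 - x^2)^n) \<le> integral {-1..1} (\<lambda>x::real. 1::real)"
  proof (rule integral_le)
    show "(\<lambda>x::real. (1 - x^2)^n) integrable_on {-1..1::real}"
      by (rule integrable_continuous_interval) (intro continuous_on_power continuous_on_diff continuous_on_const continuous_on_id)
    fix x :: real assume "x \<in> {-1..1}"
    then have "x^2 \<le> 1" by (auto simp: abs_square_le_1)
    then have "0 \<le> 1 - x^2" "1 - x^2 \<le> 1" by simp_all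
    then show "(1 - x^2)^n \<le> 1" by (simp add: power_le_one)
  qed (rule integrable_continuous_interval, rule continuous_on_const)
  have I0: "0 \<le> integral {-1..1} (\<lambda>x::real. (1 - x^2)^n)"
  proof (rule integral_nonneg)
    show "(\<lambda>x::real. (1 - x^2)^n) integrable_on {-1..1::real}"
      by (rule integrable_continuous_interval) (intro continuous_on_power continuous_on_diff continuous_on_const continuous_on_id)
    fix x :: real assume "x \<in> {-1..1}"
    then have "x^2 \<le> 1" by (auto simp: abs_square_le_1)
    then have "0 \<le> 1 - x^2" by simp
    then show "0 \<le> (1 - x^2)^n" by simp
  qed
  have coef: "fact (2*n) / c^2 = real (2*n choose n) / 4^n"
  proof -
    have "fact n * fact (2*n - n) * (2*n choose n) = (fact (2*n) :: nat)" by (rule binomial_fact_lemma) simp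
    then have "real (fact n * fact (2*n - n) * (2*n choose n)) = real (fact (2*n))" by simp
    then have b: "(fact (2*n)::real) = fact n * fact n * real (2*n choose n)"
      by (simp only: of_nat_mult of_nat_fact) (simp add: mult_2)
    have f4: "(4::real)^n = 2^n*2^n" by (simp add: power_mult_distrib[symmetric])
    have c2: "c^2 = 4^n * (fact n * fact n)" by (simp add: c_def f4 power2_eq_square)
    show ?thesis unfolding b c2 by (simp add: field_simps)
  qed
  have coef1: "fact (2*n) / c^2 \<le> 1" "0 \<le> fact (2*n) / c^2"
    unfolding coef using central_binom_le[of n] by simp_all
  have "integral {-1..1} (\<lambda>x. (legendre n x)^2) = (fact (2*n) / c^2) * integral {-1..1} (\<lambda>x::real. (1 - x^2)^n)"
    using eq I by simp
  also have "\<dots> \<le> 1 * 2"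
    using I1 I0 coef1 by (intro mult_mono) auto
  finally show ?thesis by simp
qed



lemma pderiv_Qp: "pderiv Qp = [:0,2:]"
  by (simp add: Qp_def pderiv_pCons)

lemma D2_Qp: "(pderiv ^^ 2) (Qp ^ (m+2)) =
   smult (2 * real (m+2) * (2 * real m + 3)) (Qp ^ (m+1)) + smult (4 * real (m+2) * real (m+1)) (Qp ^ m)"
proof -
  have sq: "[:0,2:] * [:0,2:] = smult 4 (Qp + 1)" by (simp add: Qp_def one_pCons)
  have d1: "pderiv (Qp ^ (m+2)) = smult (real (m+2)) (Qp ^ (m+1) * [:0,2:])"
    using pderiv_power_Suc[of Qp "m+1"] by (simp add: pderiv_Qp) (simp add: algebra_simps)
  have d1': "pderiv (Qp ^ (m+1)) = smult (real (m+1)) (Qp ^ m * [:0,2:])"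
    using pderiv_power_Suc[of Qp "m"] by (simp add: pderiv_Qp) (simp add: algebra_simps)
  have "(pderiv ^^ 2) (Qp ^ (m+2)) = pderiv (pderiv (Qp ^ (m+2)))" by (simp add: numeral_2_eq_2)
  also have "\<dots> = smult (real (m+2)) (Qp ^ (m+1) * [:2:] + [:0,2:] * smult (real (m+1)) (Qp ^ m * [:0,2:]))"
    unfolding d1 pderiv_smult pderiv_mult d1' by (simp add: pderiv_pCons)
  also have "\<dots> = smult (real (m+2)) (smult 2 (Qp ^ (m+1)) + smult (4 * real (m+1)) (Qp^m * (Qp + 1)))"
  proof -
    have "[:0,2:] * smult (real (m+1)) (Qp ^ m * [:0,2:]) = smult (real (m+1)) (Qp^m * ([:0,2:]*[:0,2:]))"
      by (simp only: mult_smult_right mult.left_commute)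
    also have "\<dots> = smult (4 * real (m+1)) (Qp^m * (Qp + 1))" unfolding sq by (simp add: algebra_simps)
    finally have e: "[:0,2:] * smult (real (m+1)) (Qp ^ m * [:0,2:]) = smult (4 * real (m+1)) (Qp^m * (Qp + 1))" .
    have e2: "Qp ^ (m+1) * [:2:] = smult 2 (Qp ^ (m+1))" by (simp add: mult.commute)
    show ?thesis unfolding e e2 ..
  qed
  also have "\<dots> = smult (2 * real (m+2) * (2 * real m + 3)) (Qp ^ (m+1)) + smult (4 * real (m+2) * real (m+1)) (Qp ^ m)"
    by (simp add: algebra_simps smult_add_right) (simp only: smult_add_left[symmetric], simp add: algebra_simps)
  finally show ?thesis .
qed

lemma rodL: "smult (2^k * fact k) (Jp k 0 0) = (pderiv ^^ k) (Qp ^ k)"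
  using rodrigues_Wp[of k 0 0] by (simp add: Wp00)

lemma legendre_deriv:
  "pderiv (Jp (m+2) 0 0) = smult (2 * real m + 3) (Jp (m+1) 0 0) + pderiv (Jp m 0 0)"
proof -
  define c :: real where "c = 2^(m+2) * fact (m+2)"
  have cpos: "c \<noteq> 0" by (simp add: c_def)
  have "smult c (pderiv (Jp (m+2) 0 0)) = pderiv (smult c (Jp (m+2) 0 0))" by (simp add: pderiv_smult)
  also have "\<dots> = pderiv ((pderiv ^^ (m+2)) (Qp ^ (m+2)))" unfolding c_def by (simp only: rodL)
  also have "\<dots> = (pderiv ^^ (m+1)) ((pderiv ^^ 2) (Qp ^ (m+2)))"
  proof -
    have "pderiv ((pderiv ^^ (m+2)) (Qp ^ (m+2))) = (pderiv ^^ ((m+1)+2)) (Qp ^ (m+2))"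
      by (simp del: funpow.simps add: funpow_Suc_right[symmetric]) (simp add: numeral_2_eq_2)
    also have "\<dots> = (pderiv ^^ (m+1)) ((pderiv ^^ 2) (Qp ^ (m+2)))" by (simp only: funpow_add o_apply)
    finally show ?thesis .
  qed
  also have "\<dots> = smult (2 * real (m+2) * (2 * real m + 3)) ((pderiv ^^ (m+1)) (Qp ^ (m+1)))
        + smult (4 * real (m+2) * real (m+1)) (pderiv ((pderiv ^^ m) (Qp ^ m)))"
    unfolding D2_Qp higher_pderiv_add higher_pderiv_smult by simp
  also have "\<dots> = smult (2 * real (m+2) * (2 * real m + 3)) (smult (2^(m+1) * fact (m+1)) (Jp (m+1) 0 0))
        + smult (4 * real (m+2) * real (m+1)) (pderiv (smult (2^m * fact m) (Jp m 0 0)))"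
    by (simp only: rodL)
  also have "\<dots> = smult c (smult (2 * real m + 3) (Jp (m+1) 0 0) + pderiv (Jp m 0 0))"
    by (simp add: c_def pderiv_smult smult_add_right fact_Suc algebra_simps)
  finally have "smult c (pderiv (Jp (m+2) 0 0)) = smult c (smult (2 * real m + 3) (Jp (m+1) 0 0) + pderiv (Jp m 0 0))" .
  then have "smult (1/c) (smult c (pderiv (Jp (m+2) 0 0))) = smult (1/c) (smult c (smult (2 * real m + 3) (Jp (m+1) 0 0) + pderiv (Jp m 0 0)))"
    by simp
  then show ?thesis using cpos by simp
qed

lemma legendre_m1: "legendre k (-1) = (-1)^k"
proof -
  have "legendre k (-1) = (\<Sum>s\<le>k. (if s = k then (-1)^k else 0))"
    unfolding legendre_def jacobiP_def
    by (intro sum.cong refl) auto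
  also have "\<dots> = (-1)^k" by simp
  finally show ?thesis .
qed

lemma intLegendre_eq:
  assumes "-1 \<le> s"
  shows "intLegendre (m+2) s = (legendre (m+2) s - legendre m s) / (2 * real m + 3)"
proof -
  define P where "P = smult (1 / (2 * real m + 3)) (Jp (m+2) 0 0 - Jp m 0 0)"
  have dP: "pderiv P = Jp (m+1) 0 0"
    unfolding P_def pderiv_smult pderiv_diff legendre_deriv
    by (simp add: field_simps smult_add_right)
  have "((\<lambda>x. poly (pderiv P) x) has_integral (poly P s - poly P (-1))) {-1..s}"
    by (rule poly_has_integral_deriv[OF assms])
  moreover have "poly P (-1) = 0"
    unfolding P_def using legendre_m1[of "m+2"] legendre_m1[of m] by (simp add: legendre_poly)
  moreover have "(\<lambda>x. poly (pderiv P) x) = legendre (m+1)"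
    by (rule ext) (simp add: dP legendre_poly)
  ultimately have "(legendre (m+1) has_integral poly P s) {-1..s}" by simp
  then have "intLegendre (m+2) s = poly P s"
    unfolding intLegendre_def by (simp add: integral_unique)
  also have "\<dots> = (legendre (m+2) s - legendre m s) / (2 * real m + 3)"
    unfolding P_def by (simp add: legendre_poly field_simps)
  finally show ?thesis .
qed



lemma Khat_eq: "Khat = {(x,y). 0 \<le> x \<and> 0 \<le> y \<and> x + y \<le> 1}"
proof -
  have "Khat = {u *\<^sub>R (0,0) + v *\<^sub>R (1,0) + w *\<^sub>R (0,1) | u v w. 0 \<le> u \<and> 0 \<le> v \<and> 0 \<le> w \<and> u + v + w = (1::real)}"
    unfolding Khat_def by (rule convex_hull_3)
  also have "\<dots> = {(x,y). 0 \<le> x \<and> 0 \<le> y \<and> x + y \<le> 1}"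
  proof (intro set_eqI iffI)
    fix z assume "z \<in> {(x,y). 0 \<le> x \<and> 0 \<le> y \<and> x + y \<le> (1::real)}"
    then obtain x y where z: "z = (x,y)" "0 \<le> x" "0 \<le> y" "x + y \<le> 1" by auto
    show "z \<in> {u *\<^sub>R (0,0) + v *\<^sub>R (1,0) + w *\<^sub>R (0,1) | u v w. 0 \<le> u \<and> 0 \<le> v \<and> 0 \<le> w \<and> u + v + w = (1::real)}"
      using z by (intro CollectI exI[of _ "1-x-y"] exI[of _ x] exI[of _ y]) auto
  qed auto
  finally show ?thesis .
qed

lemma mem_Khat: "(x,y) \<in> Khat \<longleftrightarrow> 0 \<le> x \<and> 0 \<le> y \<and> x + y \<le> 1"
  by (simp add: Khat_eq)

lemma compact_Khat: "compact Khat"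
  unfolding Khat_def by (rule compact_convex_hull) simp

lemma Khat_inner:
  fixes g :: "real \<times> real \<Rightarrow> real"
  assumes "continuous_on Khat g" "0 \<le> y" "y \<le> 1"
  shows "(\<integral>x. indicator Khat (x,y) * g (x,y) \<partial>lborel) = integral {0..1-y} (\<lambda>x. g (x,y))"
proof -
  have ind: "indicator Khat (x,y) = (indicator {0..1-y} x :: real)" for x
    using assms(2,3) by (auto simp: indicator_def mem_Khat)
  have cont: "continuous_on {0..1-y} (\<lambda>x. g (x,y))"
    by (rule continuous_on_compose2[OF assms(1)]) (auto intro!: continuous_intros simp: mem_Khat assms)
  have si: "set_integrable lborel {0..1-y} (\<lambda>x. g (x,y))"
    unfolding set_integrable_def by (rule borel_integrable_compact[OF compact_Icc cont])
  have "(\<integral>x. indicator Khat (x,y) * g (x,y) \<partial>lborel) = (LINT x:{0..1-y}|lborel. g (x,y))"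
    unfolding set_lebesgue_integral_def ind by simp
  also have "\<dots> = integral {0..1-y} (\<lambda>x. g (x,y))"
    by (rule set_borel_integral_eq_integral(2)[OF si])
  finally show ?thesis .
qed

lemma tri_fubini_snd:
  fixes g :: "real \<times> real \<Rightarrow> real"
  assumes g: "continuous_on Khat g"
  shows "integral Khat g = integral {0..1} (\<lambda>y. integral {0..1-y} (\<lambda>x. g (x,y)))"
proof -
  have int: "integrable lborel (\<lambda>z. indicator Khat z *\<^sub>R g z)"
    by (rule borel_integrable_compact[OF compact_Khat g])
  define f where "f = (\<lambda>x y. indicator Khat (x,y) * g (x,y) :: real)"
  have intP: "integrable (lborel \<Otimes>\<^sub>M lborel) (case_prod f)"
    using int unfolding f_def lborel_prod by (simp add: case_prod_unfold)
  define h where "h = (\<lambda>y. integral {0..1-y} (\<lambda>x. g (x,y)))"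
  have inner: "(\<integral>x. f x y \<partial>lborel) = indicator {0..1} y * h y" for y
  proof (cases "0 \<le> y \<and> y \<le> 1")
    case True
    then show ?thesis unfolding f_def h_def using Khat_inner[OF g] by simp
  next
    case False
    then have "f x y = 0" for x unfolding f_def by (auto simp: indicator_def mem_Khat)
    then show ?thesis using False by (simp add: indicator_def)
  qed
  have "integral Khat g = (LINT z:Khat|lborel. g z)"
    using set_borel_integral_eq_integral(2)[of Khat g] int unfolding set_integrable_def by simp
  also have "\<dots> = integral\<^sup>L (lborel \<Otimes>\<^sub>M lborel) (case_prod f)"
    unfolding set_lebesgue_integral_def lborel_prod f_def by (simp add: case_prod_unfold)
  also have "\<dots> = (\<integral>y. (\<integral>x. f x y \<partial>lborel) \<partial>lborel)"
    by (rule lborel_pair.integral_snd[OF intP, symmetric])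
  also have "\<dots> = (LINT y:{0..1}|lborel. h y)"
    unfolding set_lebesgue_integral_def inner by simp
  also have "\<dots> = integral {0..1} h"
  proof (rule set_borel_integral_eq_integral(2))
    have "integrable lborel (\<lambda>y. \<integral>x. f x y \<partial>lborel)"
      by (rule lborel_pair.integrable_snd[OF intP])
    then show "set_integrable lborel {0..1} h"
      unfolding set_integrable_def inner by simp
  qed
  finally show ?thesis unfolding h_def .
qed

lemma tri_fubini_fst:
  fixes g :: "real \<times> real \<Rightarrow> real"
  assumes g: "continuous_on Khat g"
  shows "integral Khat g = integral {0..1} (\<lambda>x. integral {0..1-x} (\<lambda>y. g (x,y)))"
proof -
  have int: "integrable lborel (\<lambda>z. indicator Khat z *\<^sub>R g z)"
    by (rule borel_integrable_compact[OF compact_Khat g])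
  define f where "f = (\<lambda>x y. indicator Khat (x,y) * g (x,y) :: real)"
  have intP: "integrable (lborel \<Otimes>\<^sub>M lborel) (case_prod f)"
    using int unfolding f_def lborel_prod by (simp add: case_prod_unfold)
  define h where "h = (\<lambda>x. integral {0..1-x} (\<lambda>y. g (x,y)))"
  have inner: "(\<integral>y. f x y \<partial>lborel) = indicator {0..1} x * h x" for x
  proof (cases "0 \<le> x \<and> x \<le> 1")
    case True
    have ind: "indicator Khat (x,y) = (indicator {0..1-x} y :: real)" for y
      using True by (auto simp: indicator_def mem_Khat)
    have cont: "continuous_on {0..1-x} (\<lambda>y. g (x,y))"
      by (rule continuous_on_compose2[OF g]) (auto intro!: continuous_intros simp: mem_Khat True)
    have si: "set_integrable lborel {0..1-x} (\<lambda>y. g (x,y))"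
      unfolding set_integrable_def by (rule borel_integrable_compact[OF compact_Icc cont])
    have "(\<integral>y. f x y \<partial>lborel) = (LINT y:{0..1-x}|lborel. g (x,y))"
      unfolding set_lebesgue_integral_def f_def ind by simp
    also have "\<dots> = h x" unfolding h_def by (rule set_borel_integral_eq_integral(2)[OF si])
    finally show ?thesis using True by simp
  next
    case False
    then have "f x y = 0" for y unfolding f_def by (auto simp: indicator_def mem_Khat)
    then show ?thesis using False by (simp add: indicator_def)
  qed
  have "integral Khat g = (LINT z:Khat|lborel. g z)"
    using set_borel_integral_eq_integral(2)[of Khat g] int unfolding set_integrable_def by simp
  also have "\<dots> = integral\<^sup>L (lborel \<Otimes>\<^sub>M lborel) (case_prod f)"
    unfolding set_lebesgue_integral_def lborel_prod f_def by (simp add: case_prod_unfold)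
  also have "\<dots> = (\<integral>x. (\<integral>y. f x y \<partial>lborel) \<partial>lborel)"
    by (rule lborel_pair.integral_fst[OF intP, symmetric])
  also have "\<dots> = (LINT x:{0..1}|lborel. h x)"
    unfolding set_lebesgue_integral_def inner by simp
  also have "\<dots> = integral {0..1} h"
  proof (rule set_borel_integral_eq_integral(2))
    have "integrable lborel (\<lambda>x. \<integral>y. f x y \<partial>lborel)"
      by (rule lborel_pair.integrable_fst[OF intP])
    then show "set_integrable lborel {0..1} h"
      unfolding set_integrable_def inner by simp
  qed
  finally show ?thesis unfolding h_def .
qed



lemma Khat_swap:
  fixes g :: "real \<times> real \<Rightarrow> real"
  assumes g: "continuous_on Khat g"
  shows "integral Khat (\<lambda>z. g (snd z, fst z)) = integral Khat g"
proof -
  have c: "continuous_on Khat (\<lambda>z. g (snd z, fst z))"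
    by (rule continuous_on_compose2[OF g]) (auto intro!: continuous_intros simp: Khat_eq)
  show ?thesis
    unfolding tri_fubini_fst[OF c] tri_fubini_snd[OF g] by simp
qed

lemma reflect_ivl:
  fixes f :: "real \<Rightarrow> real"
  shows "integral {0..c} (\<lambda>x. f (c - x)) = integral {0..c} f"
proof -
  have "integral {-c - -c..0 - -c} (\<lambda>x. (\<lambda>x. f (-x)) (x + -c)) = integral {-c..0} (\<lambda>x. f (-x))"
    by (rule integral_shift_real_ivl)
  moreover have "integral {-c..0} (\<lambda>x. f (-x)) = integral {0..c} f"
    using Henstock_Kurzweil_Integration.integral_reflect_real[of c 0 f] by simp
  ultimately show ?thesis by simp
qed

lemma Khat_refl:
  fixes g :: "real \<times> real \<Rightarrow> real"
  assumes g: "continuous_on Khat g"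
  shows "integral Khat (\<lambda>z. g (1 - fst z - snd z, snd z)) = integral Khat g"
proof -
  have c: "continuous_on Khat (\<lambda>z. g (1 - fst z - snd z, snd z))"
    by (rule continuous_on_compose2[OF g]) (auto intro!: continuous_intros simp: Khat_eq)
  have "integral {0..1-y} (\<lambda>x. g (1 - x - y, y)) = integral {0..1-y} (\<lambda>x. g (x, y))" for y
    using reflect_ivl[of "1-y" "\<lambda>x. g (x,y)"] by (simp add: algebra_simps)
  then show ?thesis
    unfolding tri_fubini_snd[OF c] tri_fubini_snd[OF g] by simp
qed

lemma inner_affine:
  fixes F :: "real \<Rightarrow> real"
  assumes F: "continuous_on {0..L} F" and L: "0 \<le> L"
  shows "integral {0..L} F = L/2 * integral {-1..1} (\<lambda>u. F (L/2 * u + L/2))"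
proof (cases "L = 0")
  case True then show ?thesis by simp
next
  case False
  then have m: "L/2 > 0" using L by simp
  have hi: "(F has_integral integral {0..L} F) (cbox 0 L)"
    using integrable_continuous_interval[OF F] by (simp add: integrable_integral)
  have "((\<lambda>x. F ((L/2) *\<^sub>R x + L/2)) has_integral (integral {0..L} F /\<^sub>R (L/2) ^ DIM(real)))
         (cbox ((0 - L/2) /\<^sub>R (L/2)) ((L - L/2) /\<^sub>R (L/2)))"
    using has_integral_affinity_iff[OF m, of F "L/2" "integral {0..L} F" 0 L] hi by simp
  moreover have "cbox ((0 - L/2) /\<^sub>R (L/2)) ((L - L/2) /\<^sub>R (L/2)) = {-1..1::real}"
    using False by simp
  ultimately have "((\<lambda>u. F (L/2 * u + L/2)) has_integral (integral {0..L} F / (L/2))) {-1..1}"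
    by (simp add: mult.commute)
  then have "integral {-1..1} (\<lambda>u. F (L/2 * u + L/2)) = integral {0..L} F / (L/2)"
    by (rule integral_unique)
  then show ?thesis using m by (simp add: field_simps)
qed

lemma duffy:
  fixes g :: "real \<times> real \<Rightarrow> real"
  assumes g: "continuous_on Khat g"
  shows "integral Khat g = integral {0..1} (\<lambda>y. (1-y)/2 * integral {-1..1} (\<lambda>u. g ((1-y)/2 * u + (1-y)/2, y)))"
proof -
  have "integral {0..1-y} (\<lambda>x. g (x,y)) = (1-y)/2 * integral {-1..1} (\<lambda>u. g ((1-y)/2 * u + (1-y)/2, y))"
    if y: "y \<in> {0..1}" for y
  proof (rule inner_affine)
    show "continuous_on {0..1 - y} (\<lambda>x. g (x, y))"
      by (rule continuous_on_compose2[OF g]) (use y in \<open>auto intro!: continuous_intros simp: mem_Khat\<close>)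
  qed (use y in auto)
  then show ?thesis unfolding tri_fubini_snd[OF g] by (intro integral_cong) auto
qed



definition HJ :: "nat \<Rightarrow> nat \<Rightarrow> nat \<Rightarrow> real \<Rightarrow> real \<Rightarrow> real" where
  "HJ n a b s t = (\<Sum>k\<le>n. real ((n + a) choose (n - k)) * real ((n + b) choose k)
       * ((s - t) / 2) ^ k * ((s + t) / 2) ^ (n - k))"

lemma HJ_scale: "HJ n a b (t * u) t = t^n * jacobiP n a b u"
  unfolding HJ_def jacobiP_def sum_distrib_left
proof (intro sum.cong refl)
  fix k assume "k \<in> {..n}"
  then have k: "k \<le> n" by simp
  have e1: "(t * u - t) / 2 = t * ((u - 1) / 2)" by (simp add: algebra_simps)
  have e2: "(t * u + t) / 2 = t * ((u + 1) / 2)" by (simp add: algebra_simps)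
  have tn: "t^n = t^k * t^(n-k)" using k by (simp add: power_add[symmetric])
  show "real ((n + a) choose (n - k)) * real ((n + b) choose k) * ((t * u - t) / 2) ^ k * ((t * u + t) / 2) ^ (n - k) =
        t ^ n * (real ((n + a) choose (n - k)) * real ((n + b) choose k) * ((u - 1) / 2) ^ k * ((u + 1) / 2) ^ (n - k))"
    unfolding e1 e2 tn power_mult_distrib by (simp add: mult_ac)
qed

lemma jacobiS_HJ:
  assumes "t \<noteq> 0 \<or> s = 0"
  shows "jacobiS n a b s t = HJ n a b s t"
proof (cases "t = 0")
  case True
  then have "s = 0" using assms by simp
  then show ?thesis using True HJ_scale[of n a b 0 0] by (simp add: jacobiS_def)
next
  case False
  then show ?thesis using HJ_scale[of n a b t "s/t"] by (simp add: jacobiS_def)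
qed

lemma continuous_HJ [continuous_intros]:
  assumes "continuous_on S f" "continuous_on S g"
  shows "continuous_on S (\<lambda>z. HJ n a b (f z) (g z))"
  unfolding HJ_def by (auto intro!: continuous_intros assms)

definition EH :: "nat \<Rightarrow> real \<Rightarrow> real \<Rightarrow> real" where
  "EH m s t = HJ (m+2) 0 0 s t - t^2 * HJ m 0 0 s t"

lemma EH_scale: "EH m (t * u) t = t^(m+2) * (legendre (m+2) u - legendre m u)"
  unfolding EH_def HJ_scale legendre_def by (simp add: algebra_simps power_add power2_eq_square)

lemma continuous_EH [continuous_intros]:
  assumes "continuous_on S f" "continuous_on S g"
  shows "continuous_on S (\<lambda>z. EH m (f z) (g z))"
  unfolding EH_def by (intro continuous_intros assms)

lemma intLegendreS_EH:
  assumes "(0 < t \<and> -t \<le> s) \<or> (t = 0 \<and> s = 0)"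
  shows "intLegendreS (m+2) s t = EH m s t / (2 * real m + 3)"
proof (cases "t = 0")
  case True
  then have "s = 0" using assms by auto
  then show ?thesis using True EH_scale[of m 0 0] by (simp add: intLegendreS_def)
next
  case False
  then have t: "0 < t" "-t \<le> s" using assms by auto
  then have "-1 \<le> s / t" by (simp add: field_simps)
  then have "intLegendre (m+2) (s/t) = (legendre (m+2) (s/t) - legendre m (s/t)) / (2 * real m + 3)"
    by (rule intLegendre_eq)
  then have "intLegendreS (m+2) s t = t^(m+2) * ((legendre (m+2) (s/t) - legendre m (s/t)) / (2 * real m + 3))"
    unfolding intLegendreS_def by simp
  also have "\<dots> = EH m (t * (s/t)) t / (2 * real m + 3)"
    unfolding EH_scale by simp
  also have "t * (s/t) = s" using t by simp
  finally show ?thesis .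
qed

lemma bary_nonneg: "z \<in> Khat \<Longrightarrow> 0 \<le> bary i z"
  by (cases z) (auto simp: bary_def mem_Khat)

lemma continuous_bary [continuous_intros]: "continuous_on S (bary i)"
proof -
  have "bary i = (\<lambda>x. 1 - fst x - snd x) \<or> bary i = fst \<or> bary i = snd"
    by (auto simp: bary_def fun_eq_iff)
  then show ?thesis by (auto intro!: continuous_intros)
qed

lemma bary_sum: "bary 1 z + bary 2 z + bary 3 z = 1"
  by (simp add: bary_def)

definition eF :: "nat \<Rightarrow> nat \<Rightarrow> pt \<Rightarrow> real" where
  "eF m j z = sqrt ((2 * real j + 3) / 2) / (2 * real j + 3) *
      EH j (bary (edge_e2 m) z - bary (edge_e1 m) z) (bary (edge_e1 m) z + bary (edge_e2 m) z)"

lemma edge_fn_eF: "z \<in> Khat \<Longrightarrow> edge_fn m j z = eF m j z"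
proof -
  assume z: "z \<in> Khat"
  define a where "a = bary (edge_e1 m) z"
  define b where "b = bary (edge_e2 m) z"
  have a: "0 \<le> a" and b: "0 \<le> b" unfolding a_def b_def using bary_nonneg[OF z] by auto
  have c: "(0 < a + b \<and> -(a+b) \<le> b - a) \<or> (a + b = 0 \<and> b - a = 0)"
    using a b by auto
  have "edge_fn m j z = sqrt ((2 * real j + 3) / 2) * intLegendreS (j+2) (b - a) (a + b)"
    by (simp only: edge_fn_def a_def b_def)
  also have "\<dots> = eF m j z"
    unfolding intLegendreS_EH[OF c] eF_def a_def[symmetric] b_def[symmetric] by simp
  finally show ?thesis .
qed

lemma continuous_eF [continuous_intros]: "continuous_on S (eF m j)"
  unfolding eF_def by (intro continuous_intros)

definition cR :: "nat \<Rightarrow> nat \<Rightarrow> pt \<Rightarrow> real" where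
  "cR i j z = bary 1 z * bary 2 z * bary 3 z *
     HJ i 2 2 (bary 1 z - bary 2 z) (bary 1 z + bary 2 z) *
     jacobiP j (2 * i + 5) 2 (2 * bary 3 z - 1)"

lemma cell_raw_cR: "z \<in> Khat \<Longrightarrow> cell_fn_raw i j z = cR i j z"
proof -
  assume z: "z \<in> Khat"
  have "bary 1 z + bary 2 z \<noteq> 0 \<or> bary 1 z - bary 2 z = 0"
    using bary_nonneg[OF z, of 1] bary_nonneg[OF z, of 2] by auto
  then show ?thesis unfolding cell_fn_raw_def cR_def jacobiS_HJ by (simp add: jacobiS_HJ)
qed

lemma continuous_cR [continuous_intros]: "continuous_on S (cR i j)"
  unfolding cR_def jacobiP_def by (auto intro!: continuous_intros)



lemma edge_reduce:
  fixes G :: "real \<times> real \<Rightarrow> real"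
  assumes G: "continuous_on UNIV G"
  shows "integral Khat (\<lambda>z. G (bary (edge_e2 m) z - bary (edge_e1 m) z, bary (edge_e1 m) z + bary (edge_e2 m) z))
       = integral Khat (\<lambda>z. G (2 * fst z + snd z - 1, 1 - snd z))"
proof -
  define g3 where "g3 = (\<lambda>z::pt. G (2 * fst z + snd z - 1, 1 - snd z))"
  have cg3: "continuous_on Khat g3" unfolding g3_def
    by (rule continuous_on_compose2[OF G]) (auto intro!: continuous_intros)
  consider "m = 1" | "m = 2" | "m \<noteq> 1 \<and> m \<noteq> 2" by blast
  then show ?thesis
  proof cases
    case 3
    show ?thesis using 3
      by (intro integral_cong) (auto simp: bary_def edge_e1_def edge_e2_def algebra_simps)
  next
    case 2
    define g2 where "g2 = (\<lambda>z::pt. G (1 - 2 * fst z - snd z, 1 - snd z))"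
    have cg2: "continuous_on Khat g2" unfolding g2_def
      by (rule continuous_on_compose2[OF G]) (auto intro!: continuous_intros)
    have "integral Khat (\<lambda>z. G (bary (edge_e2 m) z - bary (edge_e1 m) z, bary (edge_e1 m) z + bary (edge_e2 m) z))
        = integral Khat (\<lambda>z. g2 (snd z, fst z))"
      using 2 by (intro integral_cong) (auto simp: g2_def bary_def edge_e1_def edge_e2_def algebra_simps)
    also have "\<dots> = integral Khat g2" by (rule Khat_swap[OF cg2])
    also have "\<dots> = integral Khat (\<lambda>z. g3 (1 - fst z - snd z, snd z))"
      by (intro integral_cong) (auto simp: g2_def g3_def algebra_simps)
    also have "\<dots> = integral Khat g3" by (rule Khat_refl[OF cg3])
    finally show ?thesis unfolding g3_def .
  next
    case 1
    define g1 where "g1 = (\<lambda>z::pt. G (snd z - fst z, fst z + snd z))"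
    have cg1: "continuous_on Khat g1" unfolding g1_def
      by (rule continuous_on_compose2[OF G]) (auto intro!: continuous_intros)
    define h where "h = (\<lambda>z::pt. G (fst z + 2 * snd z - 1, 1 - fst z))"
    have ch: "continuous_on Khat h" unfolding h_def
      by (rule continuous_on_compose2[OF G]) (auto intro!: continuous_intros)
    have "integral Khat (\<lambda>z. G (bary (edge_e2 m) z - bary (edge_e1 m) z, bary (edge_e1 m) z + bary (edge_e2 m) z))
        = integral Khat g1"
      using 1 by (intro integral_cong) (auto simp: g1_def bary_def edge_e1_def edge_e2_def algebra_simps)
    also have "\<dots> = integral Khat (\<lambda>z. g1 (1 - fst z - snd z, snd z))" by (rule Khat_refl[OF cg1, symmetric])
    also have "\<dots> = integral Khat h"
      by (intro integral_cong) (auto simp: g1_def h_def algebra_simps)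
    also have "\<dots> = integral Khat (\<lambda>z. h (snd z, fst z))" by (rule Khat_swap[OF ch, symmetric])
    also have "\<dots> = integral Khat g3"
      by (intro integral_cong) (auto simp: h_def g3_def algebra_simps)
    finally show ?thesis unfolding g3_def .
  qed
qed

lemma edge_duffy:
  fixes G :: "real \<times> real \<Rightarrow> real"
  assumes G: "continuous_on UNIV G"
  shows "integral Khat (\<lambda>z. G (2 * fst z + snd z - 1, 1 - snd z))
       = integral {0..1} (\<lambda>y. (1-y)/2 * integral {-1..1} (\<lambda>u. G ((1-y) * u, 1-y)))"
proof -
  have cg3: "continuous_on Khat (\<lambda>z::pt. G (2 * fst z + snd z - 1, 1 - snd z))"
    by (rule continuous_on_compose2[OF G]) (auto intro!: continuous_intros)
  have e: "2 * ((1-y)/2 * u + (1-y)/2) + y - 1 = (1-y) * u" for y u :: real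
    by (simp add: field_simps)
  show ?thesis unfolding duffy[OF cg3] fst_conv snd_conv e by (rule refl)
qed

lemma integral_one_minus_pow: "integral {0..1} (\<lambda>y::real. (1-y)^k) = 1 / (real k + 1)"
proof -
  have "integral {0..1} (\<lambda>y::real. (1-y)^k) = integral {0..1} (\<lambda>y::real. y^k)"
    using reflect_ivl[of 1 "\<lambda>y. y^k"] by simp
  also have "((\<lambda>y::real. y^k) has_integral (1^(k+1)/(real k+1) - 0^(k+1)/(real k+1))) {0..1}"
    apply (rule fundamental_theorem_of_calculus)
     apply simp
    apply (auto intro!: derivative_eq_intros simp: has_real_derivative_iff_has_vector_derivative[symmetric])
    apply (case_tac k)
     apply (auto simp: field_simps)
    done
  then have "integral {0..1} (\<lambda>y::real. y^k) = 1/(real k + 1)" by (simp add: integral_unique)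
  finally show ?thesis .
qed

lemma legendre_diff_norm:
  "integral {-1..1} (\<lambda>u. (legendre (j+2) u - legendre j u)^2) \<le> 8"
  "0 \<le> integral {-1..1} (\<lambda>u. (legendre (j+2) u - legendre j u)^2)"
proof -
  have ia: "(\<lambda>u. (legendre k u)^2) integrable_on {-1..1}" for k
    unfolding legendre_poly by (rule integrable_continuous_interval) (auto intro!: continuous_intros)
  have "integral {-1..1} (\<lambda>u. (legendre (j+2) u - legendre j u)^2)
      \<le> integral {-1..1} (\<lambda>u. 2 * (legendre (j+2) u)^2 + 2 * (legendre j u)^2)"
  proof (rule integral_le)
    show "(\<lambda>u. (legendre (j+2) u - legendre j u)^2) integrable_on {-1..1}"
      unfolding legendre_poly by (rule integrable_continuous_interval) (auto intro!: continuous_intros)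
    show "(\<lambda>u. 2 * (legendre (j+2) u)^2 + 2 * (legendre j u)^2) integrable_on {-1..1}"
      using ia by (intro integrable_add integrable_on_cmult_left) auto
    fix u :: real
    show "(legendre (j+2) u - legendre j u)^2 \<le> 2 * (legendre (j+2) u)^2 + 2 * (legendre j u)^2"
      by (smt (verit) zero_le_power2 power2_diff power2_sum)
  qed
  also have "\<dots> = 2 * integral {-1..1} (\<lambda>u. (legendre (j+2) u)^2) + 2 * integral {-1..1} (\<lambda>u. (legendre j u)^2)"
    using ia by (simp add: integral_add integrable_on_cmult_left)
  also have "\<dots> \<le> 2 * 2 + 2 * 2"
    using legendre_norm_le[of "j+2"] legendre_norm_le[of j] by linarith
  finally show "integral {-1..1} (\<lambda>u. (legendre (j+2) u - legendre j u)^2) \<le> 8" by simp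
  show "0 \<le> integral {-1..1} (\<lambda>u. (legendre (j+2) u - legendre j u)^2)"
    by (rule integral_nonneg) (auto simp: legendre_poly intro!: integrable_continuous_interval continuous_intros)
qed



lemma eF_sq_integral:
  "integral Khat (\<lambda>z. (eF m j z)^2) =
     integral {-1..1} (\<lambda>u. (legendre (j+2) u - legendre j u)^2) / (4 * (2 * real j + 3) * (2 * real j + 6))"
proof -
  define \<kappa> where "\<kappa> = sqrt ((2 * real j + 3) / 2) / (2 * real j + 3)"
  have k2: "\<kappa>^2 = 1 / (2 * (2 * real j + 3))"
    unfolding \<kappa>_def by (simp add: power_divide power2_eq_square[of "2 * real j + 3"] field_simps) (simp add: power2_eq_square algebra_simps)
  define G where "G = (\<lambda>p::real\<times>real. \<kappa>^2 * (EH j (fst p) (snd p))^2)"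
  have cG: "continuous_on UNIV G" unfolding G_def
    by (intro continuous_intros)
  define N where "N = integral {-1..1} (\<lambda>u. (legendre (j+2) u - legendre j u)^2)"
  have "integral Khat (\<lambda>z. (eF m j z)^2) =
        integral Khat (\<lambda>z. G (bary (edge_e2 m) z - bary (edge_e1 m) z, bary (edge_e1 m) z + bary (edge_e2 m) z))"
    unfolding G_def eF_def \<kappa>_def by (intro integral_cong) (simp add: power_mult_distrib power_divide)
  also have "\<dots> = integral {0..1} (\<lambda>y. (1-y)/2 * integral {-1..1} (\<lambda>u. G ((1-y) * u, 1-y)))"
    unfolding edge_reduce[OF cG] edge_duffy[OF cG] ..
  also have "\<dots> = integral {0..1} (\<lambda>y. (\<kappa>^2 * N / 2) * (1-y)^(2*j+5))"
  proof (intro integral_cong)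
    fix y :: real
    have "(\<lambda>u. G ((1-y) * u, 1-y)) = (\<lambda>u. (\<kappa>^2 * (1-y)^(2*j+4)) * (legendre (j+2) u - legendre j u)^2)"
    proof (rule ext)
      fix u
      show "G ((1-y) * u, 1-y) = (\<kappa>^2 * (1-y)^(2*j+4)) * (legendre (j+2) u - legendre j u)^2"
      proof -
        have p: "((1-y)^(j+2))^2 = (1-y)^(2*j+4)"
        proof -
          have e: "(j+2)*2 = 2*j+4" by simp
          show ?thesis unfolding power_mult[symmetric] e ..
        qed
        show ?thesis unfolding G_def fst_conv snd_conv EH_scale power_mult_distrib p by (simp only: mult.assoc)
      qed
    qed
    then have eq: "integral {-1..1} (\<lambda>u. G ((1-y) * u, 1-y)) = (\<kappa>^2 * (1-y)^(2*j+4)) * N"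
      unfolding N_def by (simp only: integral_mult_right)
    have p5: "(1-y)^(2*j+5) = (1-y) * (1-y)^(2*j+4)"
    proof -
      have "2*j+5 = Suc (2*j+4)" by simp
      then show ?thesis by (simp only: power_Suc)
    qed
    show "(1-y)/2 * integral {-1..1} (\<lambda>u. G ((1-y) * u, 1-y)) = (\<kappa>^2 * N / 2) * (1-y)^(2*j+5)"
      unfolding eq p5 by simp
  qed
  also have "\<dots> = (\<kappa>^2 * N / 2) * (1 / (real (2*j+5) + 1))"
    by (simp add: integral_one_minus_pow)
  also have "\<dots> = N / (4 * (2 * real j + 3) * (2 * real j + 6))"
    unfolding k2 by (simp add: field_simps)
  finally show ?thesis unfolding N_def .
qed

lemma eF_sq_bound: "integral Khat (\<lambda>z. (eF m j z)^2) \<le> 1 / ((real j + 1) * (real j + 2))"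
proof -
  have "integral Khat (\<lambda>z. (eF m j z)^2) \<le> 8 / (4 * (2 * real j + 3) * (2 * real j + 6))"
    unfolding eF_sq_integral using legendre_diff_norm[of j]
    by (intro divide_right_mono) auto
  also have "\<dots> = 1 / ((2 * real j + 3) * (real j + 3))"
  proof -
    have "4 * (2 * real j + 3) * (2 * real j + 6) = 8 * ((2 * real j + 3) * (real j + 3))"
      by (simp add: algebra_simps)
    then show ?thesis by simp
  qed
  also have "\<dots> \<le> 1 / ((real j + 1) * (real j + 2))"
    by (intro frac_le mult_mono) auto
  finally show ?thesis .
qed

lemma telescope: "(\<Sum>j<n. 1 / ((real j + 1) * (real j + 2))) = 1 - 1 / (real n + 1)"
proof (induction n)
  case (Suc n)
  have "(\<Sum>j<Suc n. 1 / ((real j + 1) * (real j + 2))) = 1 - 1 / (real n + 1) + 1 / ((real n + 1) * (real n + 2))"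
    using Suc.IH by simp
  also have "1 / ((real n + 1) * (real n + 2)) = 1/(real n + 1) - 1/(real n + 2)"
    by (simp add: field_simps)
  also have "1 - 1 / (real n + 1) + (1/(real n + 1) - 1/(real n + 2)) = 1 - 1 / (real (Suc n) + 1)"
    by (simp add: add.commute)
  finally show ?case .
qed simp



lemma jacobiP_one: "jacobiP n a b 1 = real ((n+a) choose n)"
proof -
  have "jacobiP n a b 1 = (\<Sum>s\<le>n. (if s = 0 then real ((n+a) choose n) else 0))"
    unfolding jacobiP_def by (intro sum.cong refl) auto
  also have "\<dots> = real ((n+a) choose n)" by simp
  finally show ?thesis .
qed

lemma Jp_nonzero: "Jp n a b \<noteq> 0"
proof
  assume "Jp n a b = 0"
  then have "jacobiP n a b 1 = 0" by (metis poly_0 poly_Jp)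
  then show False unfolding jacobiP_one by simp
qed

lemma jacobi_pos: "0 < integral {-1..1} (\<lambda>x. (1-x)^a*(1+x)^b*(jacobiP n a b x)^2)"
proof -
  define f where "f = (\<lambda>x::real. (1-x)^a*(1+x)^b*(jacobiP n a b x)^2)"
  have cf: "continuous_on {-1..1} f" unfolding f_def jacobiP_def by (auto intro!: continuous_intros)
  have nn: "\<And>x. x \<in> {-1..1} \<Longrightarrow> 0 \<le> f x" unfolding f_def by auto
  have fin: "finite {x. poly (Jp n a b) x = 0}" by (rule poly_roots_finite[OF Jp_nonzero])
  have inf: "infinite {-1<..<(1::real)}" by (rule infinite_Ioo) simp
  obtain x where x: "x \<in> {-1<..<1}" "x \<notin> {x. poly (Jp n a b) x = 0}"
  proof -
    have "infinite ({-1<..<1} - {x. poly (Jp n a b) x = 0})" by (rule Diff_infinite_finite[OF fin inf])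
    then obtain x where "x \<in> {-1<..<1} - {x. poly (Jp n a b) x = 0}" using infinite_imp_nonempty by blast
    then show ?thesis using that by blast
  qed
  have "0 < f x" unfolding f_def using x by (auto simp: poly_Jp)
  then have "\<not> (\<forall>x\<in>{-1..1}. f x = 0)" using x by force
  then have ne: "integral {-1..1} f \<noteq> 0" using integral_eq_0_iff[OF cf _ nn] by simp
  have "0 \<le> integral {-1..1} f"
    by (rule integral_nonneg[OF integrable_continuous_interval[OF cf]]) (use nn in auto)
  with ne show ?thesis unfolding f_def by simp
qed

lemma cR_at:
  "cR i j ((1-y)/2*u + (1-y)/2, y) = ((1-y)/2)^2 * ((1-u) * (1+u)) * y * (1-y)^i * jacobiP i 2 2 (-u) * jacobiP j (2*i+5) 2 (2*y-1)"
proof -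
  define z where "z = ((1-y)/2*u + (1-y)/2, y)"
  have b1: "bary 1 z = (1-y)/2*(1-u)" unfolding z_def bary_def by (simp add: field_simps)
  have b2: "bary 2 z = (1-y)/2*(1+u)" unfolding z_def bary_def by (simp add: field_simps)
  have b3: "bary 3 z = y" unfolding z_def bary_def by simp
  have d: "bary 1 z - bary 2 z = (1-y) * (-u)" unfolding b1 b2 by (simp add: field_simps)
  have s: "bary 1 z + bary 2 z = 1-y" unfolding b1 b2 by (simp add: field_simps)
  have "cR i j z = bary 1 z * bary 2 z * bary 3 z * ((1-y)^i * jacobiP i 2 2 (-u)) * jacobiP j (2*i+5) 2 (2*y-1)"
    unfolding cR_def d s HJ_scale b3 ..
  also have "\<dots> = ((1-y)/2)^2 * ((1-u) * (1+u)) * y * (1-y)^i * jacobiP i 2 2 (-u) * jacobiP j (2*i+5) 2 (2*y-1)"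
    unfolding b1 b2 b3 by (simp add: power2_eq_square mult_ac)
  finally show ?thesis unfolding z_def .
qed

definition Aw :: "nat \<Rightarrow> nat \<Rightarrow> real" where
  "Aw i k = integral {-1..1} (\<lambda>v. (1-v)^2*(1+v)^2*(jacobiP i 2 2 v)*(jacobiP k 2 2 v))"

definition Bw :: "nat \<Rightarrow> nat \<Rightarrow> nat \<Rightarrow> nat \<Rightarrow> real" where
  "Bw i k j l = integral {-1..1} (\<lambda>z. (1-z)^(i+k+5)*(1+z)^2*jacobiP j (2*i+5) 2 z*jacobiP l (2*k+5) 2 z)"

lemma Aw_reflect: "integral {-1..1} (\<lambda>u. (1-u)^2*(1+u)^2*jacobiP i 2 2 (-u)*jacobiP k 2 2 (-u)) = Aw i k"
proof -
  define g where "g = (\<lambda>v::real. (1-v)^2*(1+v)^2*(jacobiP i 2 2 v)*(jacobiP k 2 2 v))"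
  have "integral {-1..-(-1)} (\<lambda>x. g (-x)) = integral {-1..1} g"
    by (rule Henstock_Kurzweil_Integration.integral_reflect_real)
  moreover have "(\<lambda>x. g (-x)) = (\<lambda>u. (1-u)^2*(1+u)^2*jacobiP i 2 2 (-u)*jacobiP k 2 2 (-u))"
    unfolding g_def by (simp add: mult_ac)
  ultimately show ?thesis unfolding Aw_def g_def by simp
qed

lemma cR_prod:
  "integral Khat (\<lambda>z. cR i j z * cR k l z) = Aw i k * Bw i k j l / 2^(i+k+13)"
proof -
  have cont: "continuous_on Khat (\<lambda>z. cR i j z * cR k l z)" by (intro continuous_intros)
  define C where "C = (\<lambda>y::real. ((1-y)/2)^2 * ((1-y)/2)^2 * y^2 * (1-y)^(i+k) * jacobiP j (2*i+5) 2 (2*y-1) * jacobiP l (2*k+5) 2 (2*y-1))"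
  have inner: "integral {-1..1} (\<lambda>u. cR i j ((1-y)/2*u + (1-y)/2, y) * cR k l ((1-y)/2*u + (1-y)/2, y)) = C y * Aw i k" for y
  proof -
    have "(\<lambda>u. cR i j ((1-y)/2*u + (1-y)/2, y) * cR k l ((1-y)/2*u + (1-y)/2, y))
        = (\<lambda>u. C y * ((1-u)^2*(1+u)^2*jacobiP i 2 2 (-u)*jacobiP k 2 2 (-u)))"
      unfolding cR_at C_def by (rule ext) (simp add: power2_eq_square power_add mult_ac)
    then show ?thesis using Aw_reflect[of i k] by simp
  qed
  have "integral Khat (\<lambda>z. cR i j z * cR k l z) = integral {0..1} (\<lambda>y. (1-y)/2 * (C y * Aw i k))"
    unfolding duffy[OF cont] inner ..
  also have "\<dots> = Aw i k / 32 * integral {0..1} (\<lambda>y. (1-y)^(i+k+5) * y^2 * jacobiP j (2*i+5) 2 (2*y-1) * jacobiP l (2*k+5) 2 (2*y-1))"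
  proof -
    have "(\<lambda>y. (1-y)/2 * (C y * Aw i k)) = (\<lambda>y. Aw i k / 32 * ((1-y)^(i+k+5) * y^2 * jacobiP j (2*i+5) 2 (2*y-1) * jacobiP l (2*k+5) 2 (2*y-1)))"
      unfolding C_def by (rule ext) (simp add: power_add power_divide field_simps eval_nat_numeral)
    then show ?thesis by simp
  qed
  also have "integral {0..1} (\<lambda>y. (1-y)^(i+k+5) * y^2 * jacobiP j (2*i+5) 2 (2*y-1) * jacobiP l (2*k+5) 2 (2*y-1))
     = 1/2 * integral {-1..1} (\<lambda>z. (1 - (1/2*z+1/2))^(i+k+5) * (1/2*z+1/2)^2 * jacobiP j (2*i+5) 2 (2*(1/2*z+1/2)-1) * jacobiP l (2*k+5) 2 (2*(1/2*z+1/2)-1))"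
    using inner_affine[of 1 "\<lambda>y. (1-y)^(i+k+5) * y^2 * jacobiP j (2*i+5) 2 (2*y-1) * jacobiP l (2*k+5) 2 (2*y-1)"]
    by (simp add: jacobiP_def continuous_intros)
  also have "\<dots> = 1/2 * (Bw i k j l / 2^(i+k+7))"
  proof -
    have "(\<lambda>z. (1 - (1/2*z+1/2))^(i+k+5) * (1/2*z+1/2)^2 * jacobiP j (2*i+5) 2 (2*(1/2*z+1/2)-1) * jacobiP l (2*k+5) 2 (2*(1/2*z+1/2)-1))
        = (\<lambda>z. ((1-z)^(i+k+5)*(1+z)^2*jacobiP j (2*i+5) 2 z*jacobiP l (2*k+5) 2 z) / 2^(i+k+7))"
    proof (rule ext)
      fix z :: real
      have e1: "1 - (1/2*z+1/2) = (1-z)/2" and e2: "1/2*z+1/2 = (1+z)/2" and e3: "2*(1/2*z+1/2)-1 = z"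
        by (simp_all add: field_simps)
      show "(1 - (1/2*z+1/2))^(i+k+5) * (1/2*z+1/2)^2 * jacobiP j (2*i+5) 2 (2*(1/2*z+1/2)-1) * jacobiP l (2*k+5) 2 (2*(1/2*z+1/2)-1)
        = ((1-z)^(i+k+5)*(1+z)^2*jacobiP j (2*i+5) 2 z*jacobiP l (2*k+5) 2 z) / 2^(i+k+7)"
        unfolding e1 e2 e3 by (simp add: power_divide power_add field_simps)
    qed
    then show ?thesis unfolding Bw_def by simp
  qed
  finally show ?thesis by (simp add: power_add field_simps)
qed



lemma Aw_comm: "Aw i k = Aw k i"
  unfolding Aw_def by (simp add: mult_ac)

lemma Aw_orth_lt: "k < i \<Longrightarrow> Aw i k = 0"
  using jacobi_orth[of "Jp k 2 2" i 2 2] degree_Jp[of k 2 2]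
  unfolding Aw_def by (simp add: poly_Jp)

lemma Aw_orth: "i \<noteq> k \<Longrightarrow> Aw i k = 0"
  by (metis Aw_comm Aw_orth_lt linorder_neqE_nat)

lemma Aw_pos: "0 < Aw i i"
  using jacobi_pos[of 2 2 i] unfolding Aw_def by (simp add: power2_eq_square mult_ac)

lemma Bw_comm: "Bw i i j l = Bw i i l j"
  unfolding Bw_def by (simp add: mult_ac)

lemma Bw_orth_lt: "l < j \<Longrightarrow> Bw i i j l = 0"
proof -
  assume lj: "l < j"
  have e: "i + i + 5 = 2*i+5" by simp
  show ?thesis
    using jacobi_orth[of "Jp l (2*i+5) 2" j "2*i+5" 2] degree_Jp[of l "2*i+5" 2] lj
    unfolding Bw_def e by (simp add: poly_Jp)
qed

lemma Bw_orth: "j \<noteq> l \<Longrightarrow> Bw i i j l = 0"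
  by (metis Bw_comm Bw_orth_lt linorder_neqE_nat)

lemma Bw_pos: "0 < Bw i i j j"
proof -
  have e: "i + i + 5 = 2*i+5" by simp
  show ?thesis using jacobi_pos[of "2*i+5" 2 j] unfolding Bw_def e by (simp add: power2_eq_square mult_ac)
qed

lemma cell_orth: "(i,j) \<noteq> (k,l) \<Longrightarrow> integral Khat (\<lambda>z. cR i j z * cR k l z) = 0"
  unfolding cR_prod by (cases "i = k") (auto simp: Aw_orth Bw_orth)

lemma cell_pos: "0 < integral Khat (\<lambda>z. (cR i j z)^2)"
  using cR_prod[of i j i j] Aw_pos[of i] Bw_pos[of i j] by (simp add: power2_eq_square)



lemma cont_int: "continuous_on Khat f \<Longrightarrow> (f::pt\<Rightarrow>real) integrable_on Khat"
  using set_borel_integral_eq_integral(1)[of Khat f] borel_integrable_compact[OF compact_Khat, of f]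
  unfolding set_integrable_def by simp

lemma L2sq_cong: "(\<And>x. x \<in> Khat \<Longrightarrow> f x = g x) \<Longrightarrow> L2sq f = L2sq g"
  unfolding L2sq_def by (intro integral_cong) simp

lemma Khat_area: "integral Khat (\<lambda>x. 1::real) = 1/2"
proof -
  have "integral Khat (\<lambda>x. 1::real) = integral {0..1} (\<lambda>y::real. integral {0..1-y} (\<lambda>x::real. 1::real))"
    by (rule tri_fubini_snd[OF continuous_on_const])
  also have "\<dots> = integral {0..1} (\<lambda>y::real. (1-y)^1)"
    by (intro integral_cong) simp
  also have "\<dots> = 1/2" using integral_one_minus_pow[of 1] by simp
  finally show ?thesis .
qed

lemma integral_sq_sum:
  fixes F :: "'i \<Rightarrow> pt \<Rightarrow> real" and w :: "'i \<Rightarrow> real"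
  assumes I: "finite I" and F: "\<And>a. a \<in> I \<Longrightarrow> continuous_on Khat (F a)"
  shows "integral Khat (\<lambda>x. (\<Sum>a\<in>I. w a * F a x)^2)
       = (\<Sum>a\<in>I. \<Sum>b\<in>I. w a * w b * integral Khat (\<lambda>x. F a x * F b x))"
proof -
  have sq: "(\<lambda>x. (\<Sum>a\<in>I. w a * F a x)^2) = (\<lambda>x. \<Sum>a\<in>I. \<Sum>b\<in>I. (w a * w b) * (F a x * F b x))"
  proof (rule ext)
    fix x
    have "(\<Sum>a\<in>I. w a * F a x)^2 = (\<Sum>a\<in>I. w a * F a x) * (\<Sum>b\<in>I. w b * F b x)"
      by (simp add: power2_eq_square)
    also have "\<dots> = (\<Sum>a\<in>I. \<Sum>b\<in>I. (w a * F a x) * (w b * F b x))"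
      by (rule sum_product)
    finally show "(\<Sum>a\<in>I. w a * F a x)^2 = (\<Sum>a\<in>I. \<Sum>b\<in>I. (w a * w b) * (F a x * F b x))"
      by (simp add: mult_ac)
  qed
  have ci: "(\<lambda>x. (w a * w b) * (F a x * F b x)) integrable_on Khat" if "a \<in> I" "b \<in> I" for a b
    by (rule cont_int) (intro continuous_intros F that)
  have "integral Khat (\<lambda>x. \<Sum>a\<in>I. \<Sum>b\<in>I. (w a * w b) * (F a x * F b x))
      = (\<Sum>a\<in>I. integral Khat (\<lambda>x. \<Sum>b\<in>I. (w a * w b) * (F a x * F b x)))"
    by (rule integral_sum[OF I]) (intro integrable_sum[OF I] ci)
  also have "\<dots> = (\<Sum>a\<in>I. \<Sum>b\<in>I. integral Khat (\<lambda>x. (w a * w b) * (F a x * F b x)))"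
    by (intro sum.cong refl integral_sum[OF I] ci)
  finally show ?thesis unfolding sq by simp
qed

lemma finite_edge_idx: "finite (edge_idx p)"
  by (rule finite_subset[of _ "{..<p}"]) (auto simp: edge_idx_def)

lemma finite_cell_idx: "finite (cell_idx p)"
  by (rule finite_subset[of _ "{..p} \<times> {..p}"]) (auto simp: cell_idx_def)

lemma cont_uE: "continuous_on Khat (\<lambda>x. \<Sum>j\<in>edge_idx p. a j * edge_fn m j x)"
proof -
  have "continuous_on Khat (\<lambda>x. \<Sum>j\<in>edge_idx p. a j * eF m j x)" by (intro continuous_intros)
  then show ?thesis by (rule continuous_on_cong[THEN iffD1, rotated 2]) (auto simp: edge_fn_eF)
qed

lemma edge_bound:
  "L2sq (\<lambda>x. \<Sum>j\<in>edge_idx p. a j * edge_fn m j x) \<le> (\<Sum>j\<in>edge_idx p. (a j)^2)"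
proof -
  define E where "E = edge_idx p"
  have fE: "finite E" unfolding E_def by (rule finite_edge_idx)
  define S where "S = (\<Sum>j\<in>E. (a j)^2)"
  have S0: "0 \<le> S" unfolding S_def by (intro sum_nonneg) simp
  have "L2sq (\<lambda>x. \<Sum>j\<in>E. a j * edge_fn m j x) = integral Khat (\<lambda>x. (\<Sum>j\<in>E. a j * eF m j x)^2)"
    unfolding L2sq_def by (intro integral_cong) (simp add: edge_fn_eF)
  also have "\<dots> \<le> integral Khat (\<lambda>x. S * (\<Sum>j\<in>E. (eF m j x)^2))"
  proof (rule integral_le)
    show "(\<lambda>x. (\<Sum>j\<in>E. a j * eF m j x)^2) integrable_on Khat" by (rule cont_int) (intro continuous_intros)
    show "(\<lambda>x. S * (\<Sum>j\<in>E. (eF m j x)^2)) integrable_on Khat" by (rule cont_int) (intro continuous_intros)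
    fix x show "(\<Sum>j\<in>E. a j * eF m j x)^2 \<le> S * (\<Sum>j\<in>E. (eF m j x)^2)"
      unfolding S_def by (rule Cauchy_Schwarz_ineq_sum)
  qed
  also have "\<dots> = S * (\<Sum>j\<in>E. integral Khat (\<lambda>x. (eF m j x)^2))"
  proof -
    have "integral Khat (\<lambda>x. \<Sum>j\<in>E. (eF m j x)^2) = (\<Sum>j\<in>E. integral Khat (\<lambda>x. (eF m j x)^2))"
      by (rule integral_sum[OF fE]) (rule cont_int, intro continuous_intros)
    then show ?thesis by simp
  qed
  also have "\<dots> \<le> S * (\<Sum>j\<in>E. 1 / ((real j + 1) * (real j + 2)))"
    by (intro mult_left_mono sum_mono eF_sq_bound S0)
  also have "(\<Sum>j\<in>E. 1 / ((real j + 1) * (real j + 2))) \<le> (\<Sum>j<p. 1 / ((real j + 1) * (real j + 2)))"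
    by (rule sum_mono2) (auto simp: E_def edge_idx_def)
  also have "\<dots> \<le> 1" unfolding telescope by simp
  finally have "L2sq (\<lambda>x. \<Sum>j\<in>E. a j * edge_fn m j x) \<le> S * 1" using S0 by (simp add: mult_left_mono)
  then show ?thesis unfolding S_def E_def by simp
qed


lemma cont_uI: "continuous_on Khat (\<lambda>x. \<Sum>(i,j)\<in>cell_idx p. aI (i,j) * cell_fn i j x)"
proof -
  have "continuous_on Khat (\<lambda>x. \<Sum>a\<in>cell_idx p. (aI a * cell_const (fst a) (snd a)) * cR (fst a) (snd a) x)"
    by (intro continuous_intros)
  then show ?thesis
    by (rule continuous_on_cong[THEN iffD1, rotated 2])
       (auto intro!: sum.cong simp: case_prod_beta cell_fn_def cell_raw_cR)
qed

lemma cell_eq: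
  "L2sq (\<lambda>x. \<Sum>(i,j)\<in>cell_idx p. aI (i,j) * cell_fn i j x) = (\<Sum>ij\<in>cell_idx p. \<bar>aI ij\<bar>^2)"
proof -
  define CI where "CI = cell_idx p"
  have fin: "finite CI" unfolding CI_def by (rule finite_cell_idx)
  define F where "F = (\<lambda>a::nat\<times>nat. cR (fst a) (snd a))"
  define w where "w = (\<lambda>a::nat\<times>nat. aI a * cell_const (fst a) (snd a))"
  have cF: "continuous_on Khat (F a)" for a unfolding F_def by (intro continuous_intros)
  have "L2sq (\<lambda>x. \<Sum>(i,j)\<in>CI. aI (i,j) * cell_fn i j x) = integral Khat (\<lambda>x. (\<Sum>a\<in>CI. w a * F a x)^2)"
    unfolding L2sq_def
    by (intro integral_cong arg_cong[where f="\<lambda>t. t^2"] sum.cong refl)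
       (auto simp: case_prod_beta cell_fn_def cell_raw_cR F_def w_def)
  also have "\<dots> = (\<Sum>a\<in>CI. \<Sum>b\<in>CI. w a * w b * integral Khat (\<lambda>x. F a x * F b x))"
    by (rule integral_sq_sum[OF fin cF])
  also have "\<dots> = (\<Sum>a\<in>CI. (aI a)^2)"
  proof (rule sum.cong[OF refl])
    fix a assume a: "a \<in> CI"
    have "(\<Sum>b\<in>CI. w a * w b * integral Khat (\<lambda>x. F a x * F b x))
        = w a * w a * integral Khat (\<lambda>x. F a x * F a x) + (\<Sum>b\<in>CI - {a}. w a * w b * integral Khat (\<lambda>x. F a x * F b x))"
      by (rule sum.remove[OF fin a])
    also have "(\<Sum>b\<in>CI - {a}. w a * w b * integral Khat (\<lambda>x. F a x * F b x)) = 0"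
    proof (rule sum.neutral, rule ballI)
      fix b assume "b \<in> CI - {a}"
      then have "(fst a, snd a) \<noteq> (fst b, snd b)" by auto
      then show "w a * w b * integral Khat (\<lambda>x. F a x * F b x) = 0"
        unfolding F_def by (simp add: cell_orth)
    qed
    also have "w a * w a * integral Khat (\<lambda>x. F a x * F a x) = (aI a)^2"
    proof -
      define P where "P = integral Khat (\<lambda>z. (cR (fst a) (snd a) z)^2)"
      have P: "0 < P" unfolding P_def by (rule cell_pos)
      have L: "L2sq (cell_fn_raw (fst a) (snd a)) = P"
        unfolding P_def L2sq_def by (intro integral_cong) (simp add: cell_raw_cR)
      have "w a * w a * integral Khat (\<lambda>x. F a x * F a x) = (aI a)^2 * ((cell_const (fst a) (snd a))^2 * P)"
        unfolding w_def F_def P_def by (simp add: power2_eq_square mult_ac)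
      also have "(cell_const (fst a) (snd a))^2 * P = 1"
        unfolding cell_const_def L using P by (simp add: power_divide)
      finally show ?thesis by simp
    qed
    finally show "(\<Sum>b\<in>CI. w a * w b * integral Khat (\<lambda>x. F a x * F b x)) = (aI a)^2" by simp
  qed
  finally show ?thesis unfolding CI_def by simp
qed

lemma sum13: "(\<Sum>j\<in>{1..3::nat}. f j) = f 1 + f 2 + (f 3 :: real)"
proof -
  have "{1..3::nat} = {1,2,3}" by auto
  then show ?thesis by simp
qed

lemma vertex_bound:
  "L2sq (\<lambda>x. \<Sum>j\<in>{1..3}. aV j * vertex_fn j x) \<le> (\<Sum>j\<in>{1..3}. (aV j)^2)"
proof -
  define S where "S = (\<Sum>j\<in>{1..3::nat}. (aV j)^2)"
  have S0: "0 \<le> S" unfolding S_def by (intro sum_nonneg) simp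
  have "L2sq (\<lambda>x. \<Sum>j\<in>{1..3}. aV j * vertex_fn j x) \<le> integral Khat (\<lambda>x. S)"
    unfolding L2sq_def
  proof (rule integral_le)
    show "(\<lambda>x. (\<Sum>j\<in>{1..3}. aV j * vertex_fn j x)^2) integrable_on Khat"
      by (rule cont_int) (simp add: vertex_fn_def[abs_def], intro continuous_intros)
    show "(\<lambda>x. S) integrable_on Khat" by (rule cont_int) (rule continuous_on_const)
    fix x assume x: "x \<in> Khat"
    have "(\<Sum>j\<in>{1..3}. aV j * vertex_fn j x)^2 \<le> S * (\<Sum>j\<in>{1..3::nat}. (vertex_fn j x)^2)"
      unfolding S_def by (rule Cauchy_Schwarz_ineq_sum)
    also have "(\<Sum>j\<in>{1..3::nat}. (vertex_fn j x)^2) \<le> 1"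
    proof -
      have n: "0 \<le> bary 1 x" "0 \<le> bary 2 x" "0 \<le> bary 3 x" using bary_nonneg[OF x] by auto
      have s: "bary 1 x + bary 2 x + bary 3 x = 1" by (rule bary_sum)
      have sq: "0 \<le> t \<Longrightarrow> t \<le> 1 \<Longrightarrow> t^2 \<le> t" for t :: real
        using mult_right_mono[of t 1 t] by (simp add: power2_eq_square)
      have "(bary 1 x)^2 \<le> bary 1 x" "(bary 2 x)^2 \<le> bary 2 x" "(bary 3 x)^2 \<le> bary 3 x"
        using n s by (intro sq; linarith)+
      then show ?thesis unfolding sum13 vertex_fn_def using s by linarith
    qed
    finally show "(\<Sum>j\<in>{1..3}. aV j * vertex_fn j x)^2 \<le> S" using S0 by (simp add: mult_left_mono)
  qed
  also have "integral Khat (\<lambda>x. S) = S * (1/2)"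
    using integral_mult_right[of Khat S "\<lambda>x. 1::real"] Khat_area by simp
  also have "\<dots> \<le> S" using S0 by simp
  finally show ?thesis unfolding S_def .
qed

lemma five_sq: "(a+b+c+d+e)^2 \<le> 5*(a^2+b^2+c^2+d^2+e^2::real)"
proof -
  have h: "0 \<le> (a-b)^2 + (a-c)^2 + (a-d)^2 + (a-e)^2 + (b-c)^2 + (b-d)^2 + (b-e)^2 + (c-d)^2 + (c-e)^2 + (d-e)^2"
    by simp
  have "5*(a^2+b^2+c^2+d^2+e^2) - (a+b+c+d+e)^2 = (a-b)^2 + (a-c)^2 + (a-d)^2 + (a-e)^2 + (b-c)^2 + (b-d)^2 + (b-e)^2 + (c-d)^2 + (c-e)^2 + (d-e)^2"
    by (simp add: power2_eq_square algebra_simps)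
  with h show ?thesis by linarith
qed



lemma total_bound:
  assumes c1: "continuous_on Khat f1" and c2: "continuous_on Khat f2" and c3: "continuous_on Khat f3"
    and c4: "continuous_on Khat f4" and c5: "continuous_on Khat f5"
  shows "L2sq (\<lambda>x. f1 x + f2 x + f3 x + f4 x + f5 x) \<le> 5 * (L2sq f1 + L2sq f2 + L2sq f3 + L2sq f4 + L2sq f5)"
proof -
  have i: "(\<lambda>x. (f x)^2) integrable_on Khat" if "continuous_on Khat f" for f :: "pt \<Rightarrow> real"
    by (rule cont_int) (intro continuous_intros that)
  have "L2sq (\<lambda>x. f1 x + f2 x + f3 x + f4 x + f5 x)
      \<le> integral Khat (\<lambda>x. 5 * ((f1 x)^2 + (f2 x)^2 + (f3 x)^2 + (f4 x)^2 + (f5 x)^2))"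
    unfolding L2sq_def
  proof (rule integral_le)
    show "(\<lambda>x. (f1 x + f2 x + f3 x + f4 x + f5 x)^2) integrable_on Khat"
      by (rule cont_int) (intro continuous_intros c1 c2 c3 c4 c5)
    show "(\<lambda>x. 5 * ((f1 x)^2 + (f2 x)^2 + (f3 x)^2 + (f4 x)^2 + (f5 x)^2)) integrable_on Khat"
      by (rule cont_int) (intro continuous_intros c1 c2 c3 c4 c5)
  qed (rule five_sq)
  also have "\<dots> = 5 * (L2sq f1 + L2sq f2 + L2sq f3 + L2sq f4 + L2sq f5)"
    unfolding L2sq_def integral_mult_right
    by (simp add: integral_add integrable_add i c1 c2 c3 c4 c5)
  finally show ?thesis .
qed

theorem lemma4p2:
  "\<exists>C>0. \<forall>(p::nat) (aV::nat \<Rightarrow> real) (aE::nat \<Rightarrow> nat \<Rightarrow> real) (aI::nat \<times> nat \<Rightarrow> real).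
     p \<ge> 1 \<longrightarrow>
     (let uV = (\<lambda>x. \<Sum>j\<in>{1..3}. aV j * vertex_fn j x);
          uE = (\<lambda>m x. \<Sum>j\<in>edge_idx p. aE m j * edge_fn m j x);
          uI = (\<lambda>x. \<Sum>(i,j)\<in>cell_idx p. aI (i,j) * cell_fn i j x);
          u = (\<lambda>x. uV x + uE 1 x + uE 2 x + uE 3 x + uI x)
      in L2sq uV \<le> C * (\<Sum>j\<in>{1..3}. \<bar>aV j\<bar>\<^sup>2)
       \<and> (\<forall>m\<in>{1..3}. L2sq (uE m) \<le> C * (\<Sum>j\<in>edge_idx p. \<bar>aE m j\<bar>\<^sup>2))
       \<and> L2sq uI = (\<Sum>ij\<in>cell_idx p. \<bar>aI ij\<bar>\<^sup>2)
       \<and> L2sq u \<le> C * ((\<Sum>j\<in>{1..3}. \<bar>aV j\<bar>\<^sup>2)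
                       + (\<Sum>m\<in>{1..3}. \<Sum>j\<in>edge_idx p. \<bar>aE m j\<bar>\<^sup>2)
                       + (\<Sum>ij\<in>cell_idx p. \<bar>aI ij\<bar>\<^sup>2)))"
proof (rule exI[of _ 15], intro conjI allI impI)
  show "(0::real) < 15" by simp
next
  fix p :: nat and aV :: "nat \<Rightarrow> real" and aE :: "nat \<Rightarrow> nat \<Rightarrow> real" and aI :: "nat \<times> nat \<Rightarrow> real"
  assume "1 \<le> p"
  define uV where "uV = (\<lambda>x. \<Sum>j\<in>{1..3}. aV j * vertex_fn j x)"
  define uE where "uE = (\<lambda>m x. \<Sum>j\<in>edge_idx p. aE m j * edge_fn m j x)"
  define uI where "uI = (\<lambda>x. \<Sum>(i,j)\<in>cell_idx p. aI (i,j) * cell_fn i j x)"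
  define SV where "SV = (\<Sum>j\<in>{1..3::nat}. \<bar>aV j\<bar>\<^sup>2)"
  define SE where "SE = (\<lambda>m. \<Sum>j\<in>edge_idx p. \<bar>aE m j\<bar>\<^sup>2)"
  define SI where "SI = (\<Sum>ij\<in>cell_idx p. \<bar>aI ij\<bar>\<^sup>2)"
  have SV0: "0 \<le> SV" unfolding SV_def by (intro sum_nonneg) simp
  have SE0: "0 \<le> SE m" for m unfolding SE_def by (intro sum_nonneg) simp
  have SI0: "0 \<le> SI" unfolding SI_def by (intro sum_nonneg) simp
  have V: "L2sq uV \<le> SV" unfolding uV_def SV_def using vertex_bound[of aV] by simp
  have E: "L2sq (uE m) \<le> SE m" for m unfolding uE_def SE_def using edge_bound[of "aE m" m p] by simp
  have I: "L2sq uI = SI" unfolding uI_def SI_def by (rule cell_eq)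
  have cV: "continuous_on Khat uV" unfolding uV_def vertex_fn_def by (intro continuous_intros)
  have cE: "continuous_on Khat (uE m)" for m unfolding uE_def by (rule cont_uE)
  have cI: "continuous_on Khat uI" unfolding uI_def by (rule cont_uI)
  have T: "L2sq (\<lambda>x. uV x + uE 1 x + uE 2 x + uE 3 x + uI x) \<le> 5 * (L2sq uV + L2sq (uE 1) + L2sq (uE 2) + L2sq (uE 3) + L2sq uI)"
    by (rule total_bound[OF cV cE cE cE cI])
  have sE: "(\<Sum>m\<in>{1..3}. SE m) = SE 1 + SE 2 + SE 3" by (rule sum13)
  have hV: "L2sq uV \<le> 15 * SV" using V SV0 by linarith
  have hE: "\<forall>m\<in>{1..3}. L2sq (uE m) \<le> 15 * SE m"
  proof (intro ballI)
    fix m :: nat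
    show "L2sq (uE m) \<le> 15 * SE m" using E[of m] SE0[of m] by linarith
  qed
  have hT: "L2sq (\<lambda>x. uV x + uE 1 x + uE 2 x + uE 3 x + uI x) \<le> 15 * (SV + (\<Sum>m\<in>{1..3}. SE m) + SI)"
    unfolding sE using T V E[of 1] E[of 2] E[of 3] I SV0 SE0[of 1] SE0[of 2] SE0[of 3] SI0 by argo
  show "let uV = (\<lambda>x. \<Sum>j\<in>{1..3}. aV j * vertex_fn j x);
          uE = (\<lambda>m x. \<Sum>j\<in>edge_idx p. aE m j * edge_fn m j x);
          uI = (\<lambda>x. \<Sum>(i,j)\<in>cell_idx p. aI (i,j) * cell_fn i j x);
          u = (\<lambda>x. uV x + uE 1 x + uE 2 x + uE 3 x + uI x)
      in L2sq uV \<le> 15 * (\<Sum>j\<in>{1..3}. \<bar>aV j\<bar>\<^sup>2)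
       \<and> (\<forall>m\<in>{1..3}. L2sq (uE m) \<le> 15 * (\<Sum>j\<in>edge_idx p. \<bar>aE m j\<bar>\<^sup>2))
       \<and> L2sq uI = (\<Sum>ij\<in>cell_idx p. \<bar>aI ij\<bar>\<^sup>2)
       \<and> L2sq u \<le> 15 * ((\<Sum>j\<in>{1..3}. \<bar>aV j\<bar>\<^sup>2)
                       + (\<Sum>m\<in>{1..3}. \<Sum>j\<in>edge_idx p. \<bar>aE m j\<bar>\<^sup>2)
                       + (\<Sum>ij\<in>cell_idx p. \<bar>aI ij\<bar>\<^sup>2))"
    unfolding Let_def uV_def[symmetric] uE_def[symmetric] uI_def[symmetric]
    using hV hE I hT unfolding SV_def SE_def SI_def by simp
qed


end
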